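(* If $p$ is an odd prime, then ${\rm Comp}(\mathbb{Z}_{p^2})=\{0,1,3\}$.
   Context: $\mathbb{Z}_n$ is the cyclic group of integers modulo $n$. A skew morphism of a finite group $G$ is a permutation $\varphi$ of $G$ fixing the identity such that for each $a\in G$ there is a non-negative integer $i_a$ with $\varphi(ab)=\varphi(a)\varphi^{i_a}(b)$ for all $b\in G$. ${\rm ord}(\varphi)$ is the order of $\langle\varphi\rangle$. If $\varphi$ is non-trivial, $\pi_\varphi(a)$ is the unique such $i_a\in\{1,\dots,{\rm ord}(\varphi)-1\}$; if $\varphi$ is the identity, $\pi_\varphi(a)=1$. Let $\sigma_\varphi(x,y)=\sum_{i=0}^{x-1}\pi_\varphi(\varphi^i(y))\in\mathbb{Z}_{{\rm ord}(\varphi)}$. The derived skew morphism $\varphi'$ of a skew morphism $\varphi$ of $\mathbb{Z}_n$ is the skew morphism of $\mathbb{Z}_{{\rm ord}(\varphi)}$ given by $\varphi'(a)=\sigma_\varphi(a,1)$. Set $\varphi^{(0)}=\varphi$, $\varphi^{(i+1)}=(\varphi^{(i)})'$. For $n\ge 2$ the complexity of $\varphi$ is the unique non-negative integer $c$ such that $\varphi^{(c)}$ is a skew morphism of a non-trivial cyclic group and $\varphi^{(c+1)}$ is a skew morphism of $\mathbb{Z}_1$. ${\rm Comp}(\mathbb{Z}_n)$ denotes the set of complexities of all skew morphisms of $\mathbb{Z}_n$. *)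

theory Defs
  imports Main "HOL-Computational_Algebra.Primes"
begin

text \<open>Z_n is represented by the residues {0..<n} (n \<ge> 1) with addition mod n;
  a map on Z_n is a function nat \<Rightarrow> nat, only its values on {0..<n} matter.\<close>

definition skew_morphism :: "nat \<Rightarrow> (nat \<Rightarrow> nat) \<Rightarrow> bool" where
  "skew_morphism n \<phi> \<longleftrightarrow> n \<ge> 1 \<and> bij_betw \<phi> {0..<n} {0..<n} \<and> \<phi> 0 = 0 \<and>
     (\<forall>a<n. \<exists>i::nat. \<forall>b<n. \<phi> ((a + b) mod n) = (\<phi> a + (\<phi> ^^ i) b) mod n)"

definition skew_ord :: "nat \<Rightarrow> (nat \<Rightarrow> nat) \<Rightarrow> nat" where
  "skew_ord n \<phi> = (LEAST k. k > 0 \<and> (\<forall>x<n. (\<phi> ^^ k) x = x))"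

definition is_identity_on :: "nat \<Rightarrow> (nat \<Rightarrow> nat) \<Rightarrow> bool" where
  "is_identity_on n \<phi> \<longleftrightarrow> (\<forall>x<n. \<phi> x = x)"

definition skew_pi :: "nat \<Rightarrow> (nat \<Rightarrow> nat) \<Rightarrow> nat \<Rightarrow> nat" where
  "skew_pi n \<phi> a = (if is_identity_on n \<phi> then 1 else
     (THE i. i \<in> {1..<skew_ord n \<phi>} \<and>
        (\<forall>b<n. \<phi> ((a + b) mod n) = (\<phi> a + (\<phi> ^^ i) b) mod n)))"

definition skew_sigma :: "nat \<Rightarrow> (nat \<Rightarrow> nat) \<Rightarrow> nat \<Rightarrow> nat \<Rightarrow> nat" where
  "skew_sigma n \<phi> x y = (\<Sum>i<x. skew_pi n \<phi> ((\<phi> ^^ i) y)) mod skew_ord n \<phi>"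

definition derived :: "nat \<Rightarrow> (nat \<Rightarrow> nat) \<Rightarrow> nat \<Rightarrow> nat" where
  "derived n \<phi> a = skew_sigma n \<phi> a (1 mod n)"

definition derive_step :: "nat \<times> (nat \<Rightarrow> nat) \<Rightarrow> nat \<times> (nat \<Rightarrow> nat)" where
  "derive_step nf = (skew_ord (fst nf) (snd nf), derived (fst nf) (snd nf))"

definition complexity :: "nat \<Rightarrow> (nat \<Rightarrow> nat) \<Rightarrow> nat" where
  "complexity n \<phi> = (THE c. fst ((derive_step ^^ c) (n, \<phi>)) \<ge> 2 \<and>
                            fst ((derive_step ^^ (c + 1)) (n, \<phi>)) = 1)"

definition Comp :: "nat \<Rightarrow> nat set" where
  "Comp n = {c. \<exists>\<phi>. skew_morphism n \<phi> \<and> complexity n \<phi> = c}"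

end

theory Submission
  imports Defs "HOL-Number_Theory.Number_Theory"
begin

definition Vx :: "nat \<Rightarrow> (nat \<Rightarrow> nat) \<Rightarrow> nat \<Rightarrow> nat \<Rightarrow> bool" where
  "Vx N f a i \<longleftrightarrow> (\<forall>b<N. f ((a + b) mod N) = (f a + (f ^^ i) b) mod N)"

definition Addx :: "nat \<Rightarrow> (nat \<Rightarrow> nat) \<Rightarrow> nat \<Rightarrow> bool" where
  "Addx N f d \<longleftrightarrow> (\<forall>y<N. f ((d + y) mod N) = (f d + f y) mod N)"

lemma sum_lessThan_add: "(\<Sum>i<a+(b::nat). h i) = (\<Sum>i<a. h i) + (\<Sum>i<b. h (a+i))"
  by (induction b) (auto simp: add.assoc)

lemma sum_periodic:
  assumes "\<And>i. h (i + d) = (h i :: 'a::comm_semiring_1)"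
  shows "(\<Sum>i<d*t. h i) = of_nat t * (\<Sum>i<d. h i)"
proof (induction t)
  case 0 then show ?case by simp
next
  case (Suc t)
  have per: "h (d*t + i) = h i" for i
  proof (induction t)
    case 0 then show ?case by simp
  next
    case (Suc t)
    have "h (d * Suc t + i) = h ((d*t + i) + d)" by (simp add: algebra_simps)
    also have "\<dots> = h (d*t+i)" by (rule assms)
    finally show ?case using Suc by simp
  qed
  have "(\<Sum>i<d*Suc t. h i) = (\<Sum>i<d*t + d. h i)" by (simp add: algebra_simps)
  also have "\<dots> = (\<Sum>i<d*t. h i) + (\<Sum>i<d. h (d*t+i))" by (rule sum_lessThan_add)
  also have "\<dots> = of_nat t * (\<Sum>i<d. h i) + (\<Sum>i<d. h i)" using Suc per by simp
  finally show ?case by (simp add: algebra_simps)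
qed

lemma derived_0[simp]: "Defs.derived N f 0 = 0"
  by (simp add: Defs.derived_def skew_sigma_def)

lemma skew_ord_1: assumes "g 0 = 0" shows "skew_ord 1 g = 1"
proof -
  have "(g ^^ k) 0 = 0" for k by (induction k) (auto simp: assms)
  then show ?thesis unfolding skew_ord_def
    by (intro Least_equality) (auto simp: assms)
qed

lemma chain_one:
  assumes "fst ((derive_step^^c) X) = 1" "c \<ge> 1" "j \<ge> c"
  shows "fst ((derive_step^^j) X) = 1"
  using assms(3)
proof (induction j rule: dec_induct)
  case base then show ?case using assms(1) .
next
  case (step m)
  have "m \<ge> 1" using step assms by simp
  then obtain m' where m': "m = Suc m'" by (cases m) auto
  define Y where "Y = (derive_step^^m) X"
  have Y0: "snd Y 0 = 0" unfolding Y_def m' by (simp add: derive_step_def)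
  have Y1: "fst Y = 1" using step Y_def by simp
  have e: "(derive_step^^Suc m) X = derive_step Y" by (simp add: Y_def)
  have "fst (derive_step Y) = 1" using Y0 Y1
    by (simp only: derive_step_def fst_conv) (metis One_nat_def skew_ord_1)
  then show ?case using e by (simp only:)
qed

lemma complexity_eq:
  assumes "\<forall>i\<le>C. fst ((derive_step^^i) (n, \<phi>)) \<ge> 2"
    and "fst ((derive_step^^(C+1)) (n, \<phi>)) = 1"
  shows "complexity n \<phi> = C"
  unfolding complexity_def
proof (rule the_equality)
  show "2 \<le> fst ((derive_step ^^ C) (n, \<phi>)) \<and> fst ((derive_step ^^ (C + 1)) (n, \<phi>)) = 1"
    using assms by auto
next
  fix c assume c: "2 \<le> fst ((derive_step ^^ c) (n, \<phi>)) \<and> fst ((derive_step ^^ (c + 1)) (n, \<phi>)) = 1"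
  show "c = C"
  proof (rule ccontr)
    assume "c \<noteq> C"
    then consider "c < C" | "c > C" by linarith
    then show False
    proof cases
      case 1 then have "c + 1 \<le> C" by simp
      then show False using assms(1) c by fastforce
    next
      case 2
      have "fst ((derive_step ^^ c) (n, \<phi>)) = 1"
        using chain_one[OF assms(2)] 2 by simp
      then show False using c by simp
    qed
  qed
qed


lemma mod_cancel_left_lt:
  fixes c x y N :: nat
  assumes "(c + x) mod N = (c + y) mod N" "x < N" "y < N"
  shows "x = y"
proof -
  have "[c + x = c + y] (mod N)" using assms(1) by (simp add: cong_def)
  then have "[x = y] (mod N)" by (simp add: cong_add_lcancel_nat)
  then show ?thesis using assms(2,3) by (simp add: cong_def)
qed

locale skew =
  fixes N :: nat and f :: "nat \<Rightarrow> nat"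
  assumes sk: "skew_morphism N f"
begin

lemma N_pos: "N \<ge> 1" using sk unfolding skew_morphism_def by blast
lemma bij: "bij_betw f {0..<N} {0..<N}" using sk unfolding skew_morphism_def by blast
lemma f0[simp]: "f 0 = 0" using sk unfolding skew_morphism_def by blast
lemma exV: "a < N \<Longrightarrow> \<exists>i. Vx N f a i"
  using sk unfolding skew_morphism_def Vx_def by blast

lemma f_range: "x < N \<Longrightarrow> f x < N"
  using bij by (auto simp: bij_betw_def)

lemma f_inj: "x < N \<Longrightarrow> y < N \<Longrightarrow> f x = f y \<Longrightarrow> x = y"
  using bij by (auto simp: bij_betw_def inj_on_def)

lemma f_surj: "y < N \<Longrightarrow> \<exists>x<N. f x = y"
proof -
  assume "y < N"
  then have "y \<in> f ` {0..<N}" using bij by (auto simp: bij_betw_def)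
  then show ?thesis by auto
qed

lemma pow_range: "x < N \<Longrightarrow> (f ^^ i) x < N"
  by (induction i) (auto simp: f_range)

lemma pow_inj: "x < N \<Longrightarrow> y < N \<Longrightarrow> (f ^^ i) x = (f ^^ i) y \<Longrightarrow> x = y"
proof (induction i)
  case 0 then show ?case by simp
next
  case (Suc i)
  have "(f ^^ i) x = (f ^^ i) y"
    using Suc.prems by (auto intro: f_inj pow_range)
  then show ?case using Suc by blast
qed

lemma pow0[simp]: "(f ^^ i) 0 = 0"
  by (induction i) auto

lemma ex_period: "\<exists>j>0. \<forall>x<N. (f ^^ j) x = x"
proof -
  let ?F = "\<lambda>i. restrict (f ^^ i) {0..<N}"
  have "range ?F \<subseteq> {0..<N} \<rightarrow>\<^sub>E {0..<N}" using pow_range by auto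
  moreover have "finite ({0..<N} \<rightarrow>\<^sub>E {0..<N})" by (rule finite_PiE) auto
  ultimately have "finite (range ?F)" by (rule finite_subset)
  hence "\<not> inj ?F" using finite_imageD infinite_UNIV_nat by blast
  then obtain i j where ij: "i \<noteq> j" "?F i = ?F j" by (auto simp: inj_def)
  have "\<exists>i j. i < j \<and> ?F i = ?F j"
  proof (cases "i < j")
    case True then show ?thesis using ij by blast
  next
    case False then have "j < i" using ij by simp
    then show ?thesis using ij(2) by (intro exI[of _ j] exI[of _ i]) simp
  qed
  then obtain i j where ij: "i < j" "?F i = ?F j" by blast
  have "(f ^^ (j - i)) x = x" if "x < N" for x
  proof -
    have "(f ^^ i) ((f ^^ (j - i)) x) = (f ^^ (i + (j - i))) x" by (simp add: funpow_add)
    also have "\<dots> = (f ^^ j) x" using ij by simp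
    also have "\<dots> = (f ^^ i) x"
    proof -
      have "?F j x = ?F i x" using ij(2) by simp
      then show ?thesis using that by simp
    qed
    finally show ?thesis using that pow_inj pow_range by blast
  qed
  then show ?thesis using ij by (intro exI[of _ "j - i"]) auto
qed

abbreviation "M \<equiv> skew_ord N f"

lemma M_props: "M > 0" "\<And>x. x < N \<Longrightarrow> (f ^^ M) x = x"
proof -
  have "M > 0 \<and> (\<forall>x<N. (f ^^ M) x = x)"
    unfolding skew_ord_def by (rule LeastI_ex) (rule ex_period)
  then show "M > 0" "\<And>x. x < N \<Longrightarrow> (f ^^ M) x = x" by auto
qed

lemma M_min: "0 < j \<Longrightarrow> j < M \<Longrightarrow> \<exists>x<N. (f ^^ j) x \<noteq> x"
  unfolding skew_ord_def using not_less_Least by blast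

lemma M_le: "0 < j \<Longrightarrow> \<forall>x<N. (f ^^ j) x = x \<Longrightarrow> M \<le> j"
  using M_min not_le by blast

lemma pow_mult_M: "x < N \<Longrightarrow> (f ^^ (M * q)) x = x"
proof (induction q)
  case 0 then show ?case by simp
next
  case (Suc q)
  have "(f ^^ (M * Suc q)) x = (f ^^ M) ((f ^^ (M * q)) x)" by (simp add: funpow_add)
  then show ?case using Suc M_props by simp
qed

lemma pow_mod: "x < N \<Longrightarrow> (f ^^ i) x = (f ^^ (i mod M)) x"
proof -
  assume x: "x < N"
  have "(f ^^ i) x = (f ^^ (i mod M + M * (i div M))) x" by simp
  also have "\<dots> = (f ^^ (i mod M)) ((f ^^ (M * (i div M))) x)" by (simp only: funpow_add comp_apply)
  also have "\<dots> = (f ^^ (i mod M)) x" using pow_mult_M x by simp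
  finally show ?thesis .
qed

lemma pow_id_dvd: "\<forall>x<N. (f ^^ j) x = x \<Longrightarrow> M dvd j"
proof -
  assume h: "\<forall>x<N. (f ^^ j) x = x"
  have "\<forall>x<N. (f ^^ (j mod M)) x = x"
  proof (intro allI impI)
    fix x assume x: "x < N"
    have "(f ^^ j) x = (f ^^ (j mod M)) x" by (rule pow_mod[OF x])
    then show "(f ^^ (j mod M)) x = x" using h x by simp
  qed
  moreover have "j mod M < M" using M_props by simp
  ultimately have "j mod M = 0" using M_min[of "j mod M"] by auto
  then show ?thesis by auto
qed

lemma pow_eq_mod_aux: "i \<le> j \<Longrightarrow> \<forall>x<N. (f ^^ i) x = (f ^^ j) x \<Longrightarrow> i mod M = j mod M"
proof -
  assume ij: "i \<le> j" and h: "\<forall>x<N. (f ^^ i) x = (f ^^ j) x"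
  have "(f ^^ (j - i)) x = x" if "x < N" for x
  proof -
    have "(f ^^ i) ((f ^^ (j - i)) x) = (f ^^ (i + (j - i))) x" by (simp only: funpow_add comp_apply)
    also have "\<dots> = (f ^^ j) x" using ij by simp
    also have "\<dots> = (f ^^ i) x" using h that by simp
    finally show ?thesis using that pow_inj pow_range by blast
  qed
  then have "M dvd j - i" using pow_id_dvd by blast
  then have "j mod M = i mod M" using ij by (simp add: mod_eq_dvd_iff_nat)
  then show ?thesis by simp
qed

lemma pow_eq_mod: "\<forall>x<N. (f ^^ i) x = (f ^^ j) x \<Longrightarrow> i mod M = j mod M"
proof (cases "i \<le> j")
  case True
  assume "\<forall>x<N. (f ^^ i) x = (f ^^ j) x"
  then show ?thesis using pow_eq_mod_aux[of i j] True by blast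
next
  case False
  assume h: "\<forall>x<N. (f ^^ i) x = (f ^^ j) x"
  then have "\<forall>x<N. (f ^^ j) x = (f ^^ i) x" by simp
  then have "j mod M = i mod M" using pow_eq_mod_aux[of j i] False by simp
  then show ?thesis by simp
qed

lemma V_mod: "Vx N f a i \<Longrightarrow> Vx N f a (i mod M)"
  unfolding Vx_def
proof (intro allI impI)
  fix b assume V: "\<forall>b<N. f ((a + b) mod N) = (f a + (f ^^ i) b) mod N" and b: "b < N"
  have "(f ^^ i) b = (f ^^ (i mod M)) b" by (rule pow_mod[OF b])
  then show "f ((a + b) mod N) = (f a + (f ^^ (i mod M)) b) mod N" using V b by simp
qed

lemma V_cong: "Vx N f a i \<Longrightarrow> Vx N f a j \<Longrightarrow> i mod M = j mod M"
proof -
  assume "Vx N f a i" "Vx N f a j"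
  then have "\<forall>b<N. (f ^^ i) b = (f ^^ j) b"
  proof (intro allI impI)
    fix b assume b: "b < N"
    have "(f a + (f ^^ i) b) mod N = (f a + (f ^^ j) b) mod N"
      using \<open>Vx N f a i\<close> \<open>Vx N f a j\<close> b unfolding Vx_def by metis
    then show "(f ^^ i) b = (f ^^ j) b" using mod_cancel_left_lt pow_range b by blast
  qed
  then show ?thesis by (rule pow_eq_mod)
qed

lemma ident_iff: "is_identity_on N f \<longleftrightarrow> M = 1"
proof
  assume "is_identity_on N f"
  then have "\<forall>x<N. (f ^^ 1) x = x" by (simp add: is_identity_on_def)
  then have "M \<le> 1" using M_le[of 1] by simp
  then show "M = 1" using M_props(1) by simp
next
  assume M1: "M = 1"
  show "is_identity_on N f" unfolding is_identity_on_def
  proof (intro allI impI)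
    fix x assume "x < N"
    then have "(f ^^ M) x = x" by (rule M_props(2))
    then show "f x = x" using M1 by simp
  qed
qed

lemma V0_ident: "a < N \<Longrightarrow> Vx N f a 0 \<Longrightarrow> is_identity_on N f"
proof -
  assume a: "a < N" and V: "Vx N f a 0"
  have fa: "f a = a"
  proof -
    have "f ((a + (N - a) mod N) mod N) = (f a + (N - a) mod N) mod N"
      using V a by (simp add: Vx_def)
    moreover have "(a + (N - a) mod N) mod N = 0" using a
      by (cases "a = 0") auto
    ultimately have "(f a + (N - a) mod N) mod N = 0" by simp
    then have "[f a + (N - a) mod N = a + (N - a) mod N] (mod N)"
      using \<open>(a + (N - a) mod N) mod N = 0\<close> by (simp add: cong_def)
    then have "[f a = a] (mod N)" by (simp add: cong_add_rcancel_nat)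
    then show ?thesis using a f_range by (simp add: cong_def)
  qed
  show ?thesis unfolding is_identity_on_def
  proof (intro allI impI)
    fix x assume x: "x < N"
    define b where "b = (x + N - a) mod N"
    have b: "b < N" using N_pos b_def by simp
    have "(a + b) mod N = (a + (x + N - a)) mod N" unfolding b_def by (simp add: mod_add_right_eq)
    also have "a + (x + N - a) = x + N" using a by simp
    finally have ab: "(a + b) mod N = x" using x by simp
    have "f ((a + b) mod N) = (f a + (f ^^ 0) b) mod N" using V b unfolding Vx_def by blast
    then show "f x = x" using ab fa by simp
  qed
qed

abbreviation "P \<equiv> skew_pi N f"

lemma P_props:
  assumes a: "a < N"
  shows "Vx N f a (P a)" "1 \<le> P a" "\<not> is_identity_on N f \<Longrightarrow> P a < M"
proof -
  have "Vx N f a (P a) \<and> 1 \<le> P a \<and> (\<not> is_identity_on N f \<longrightarrow> P a < M)"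
  proof (cases "is_identity_on N f")
    case True
    then have "Vx N f a 1" using a unfolding Vx_def is_identity_on_def by simp
    then show ?thesis using True by (simp add: skew_pi_def)
  next
    case False
    obtain i where i: "Vx N f a i" using exV a by blast
    define i' where "i' = i mod M"
    have Vi': "Vx N f a i'" using V_mod i i'_def by simp
    have "i' \<noteq> 0"
    proof
      assume "i' = 0"
      then have "Vx N f a 0" using Vi' by simp
      then show False using V0_ident a False by blast
    qed
    moreover have "i' < M" using M_props i'_def by simp
    ultimately have i'r: "i' \<in> {1..<M}" by simp
    have "(THE j. j \<in> {1..<M} \<and> (\<forall>b<N. f ((a + b) mod N) = (f a + (f ^^ j) b) mod N)) = i'"
    proof (rule the_equality)
      show "i' \<in> {1..<M} \<and> (\<forall>b<N. f ((a + b) mod N) = (f a + (f ^^ i') b) mod N)"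
        using i'r Vi' by (simp add: Vx_def)
    next
      fix j assume j: "j \<in> {1..<M} \<and> (\<forall>b<N. f ((a + b) mod N) = (f a + (f ^^ j) b) mod N)"
      then have "Vx N f a j" by (simp add: Vx_def)
      then have "j mod M = i' mod M" using V_cong Vi' by blast
      then show "j = i'" using j i'r by simp
    qed
    then have "P a = i'" using False by (simp add: skew_pi_def)
    then show ?thesis using Vi' i'r False by simp
  qed
  then show "Vx N f a (P a)" "1 \<le> P a" "\<not> is_identity_on N f \<Longrightarrow> P a < M" by auto
qed

lemma P_eq:
  assumes a: "a < N" and ni: "\<not> is_identity_on N f" and V: "Vx N f a i"
  shows "P a = i mod M"
proof -
  have "P a mod M = i mod M" using V_cong[OF P_props(1)[OF a] V] .
  moreover have "P a < M" using P_props(3) a ni by blast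
  ultimately show ?thesis by simp
qed

lemma iter:
  assumes x: "x < N" and y: "y < N"
  shows "(f ^^ j) ((x + y) mod N) = ((f ^^ j) x + (f ^^ (\<Sum>i<j. P ((f ^^ i) x))) y) mod N"
proof (induction j)
  case 0 then show ?case by simp
next
  case (Suc j)
  define A where "A = (f ^^ j) x"
  define S where "S = (\<Sum>i<j. P ((f ^^ i) x))"
  define B where "B = (f ^^ S) y"
  have A: "A < N" using pow_range x A_def by simp
  have B: "B < N" using pow_range y B_def by simp
  have e0: "(f ^^ Suc j) ((x + y) mod N) = f ((A + B) mod N)"
    using Suc by (simp add: A_def B_def S_def)
  have e1: "f ((A + B) mod N) = (f A + (f ^^ P A) B) mod N"
    using P_props(1)[OF A] B by (simp add: Vx_def)
  have e2: "(f ^^ P A) B = (f ^^ (S + P A)) y"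
    by (simp add: B_def funpow_add add.commute[of S])
  have e3: "(\<Sum>i<Suc j. P ((f ^^ i) x)) = S + P A"
    by (simp add: S_def A_def)
  show ?case unfolding e0 e1 e2 e3 by (simp add: A_def)
qed

lemma cocycle:
  assumes x: "x < N" and y: "y < N"
  shows "Vx N f ((x + y) mod N) (\<Sum>i<P x. P ((f ^^ i) y))"
  unfolding Vx_def
proof (intro allI impI)
  fix z assume z: "z < N"
  let ?S = "\<Sum>i<P x. P ((f ^^ i) y)"
  have yz: "(y + z) mod N < N" using N_pos by simp
  have e0: "((x + y) mod N + z) mod N = (x + (y + z) mod N) mod N"
    by (simp add: mod_add_left_eq mod_add_right_eq add.assoc)
  have e1: "f ((x + (y + z) mod N) mod N) = (f x + (f ^^ P x) ((y + z) mod N)) mod N"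
    using P_props(1)[OF x] yz by (simp add: Vx_def)
  have e2: "(f ^^ P x) ((y + z) mod N) = ((f ^^ P x) y + (f ^^ ?S) z) mod N"
    by (rule iter[OF y z])
  have e3: "f ((x + y) mod N) = (f x + (f ^^ P x) y) mod N"
    using P_props(1)[OF x] y by (simp add: Vx_def)
  show "f (((x + y) mod N + z) mod N) = (f ((x + y) mod N) + (f ^^ ?S) z) mod N"
    unfolding e0 e1 e2 e3 by (simp add: mod_add_left_eq mod_add_right_eq add.assoc)
qed

lemma orbit:
  assumes N2: "N \<ge> 2" and j: "(f ^^ j) 1 = 1"
  shows "M dvd j"
proof -
  have one: "1 < N" using N2 by simp
  define d where "d = (LEAST d. d > 0 \<and> (f ^^ d) 1 = 1)"
  have ex: "\<exists>d. d > 0 \<and> (f ^^ d) 1 = 1" using M_props one by blast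
  have d: "d > 0" "(f ^^ d) 1 = 1" using LeastI_ex[OF ex] unfolding d_def by auto
  have dmin: "\<not> (0 < e \<and> (f ^^ e) 1 = 1)" if "e < d" for e
    using not_less_Least[of e "\<lambda>d. d > 0 \<and> (f ^^ d) 1 = 1"] that unfolding d_def by blast
  have pd: "(f ^^ (d * q)) 1 = 1" for q
  proof (induction q)
    case 0 then show ?case by simp
  next
    case (Suc q)
    have "(f ^^ (d * Suc q)) 1 = (f ^^ d) ((f ^^ (d * q)) 1)"
      by (simp only: mult_Suc_right funpow_add comp_apply)
    then show ?case using Suc d by simp
  qed
  have dvd_d: "d dvd a" if a: "(f ^^ a) 1 = 1" for a
  proof -
    have ad: "a = a mod d + d * (a div d)" by (rule mod_mult_div_eq[symmetric])
    have "(f ^^ a) 1 = (f ^^ (a mod d + d * (a div d))) 1" using ad by (rule arg_cong)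
    also have "\<dots> = (f ^^ (a mod d)) ((f ^^ (d * (a div d))) 1)"
      by (simp only: funpow_add comp_apply)
    also have "(f ^^ (d * (a div d))) 1 = 1" by (rule pd)
    finally have "(f ^^ (a mod d)) 1 = 1" using a by simp
    moreover have "a mod d < d" using d by simp
    ultimately have "a mod d = 0" using dmin[of "a mod d"] by auto
    then show ?thesis by (simp add: dvd_eq_mod_eq_0)
  qed
  have per: "P ((f ^^ (i + d)) 1) = P ((f ^^ i) 1)" for i
  proof -
    have "(f ^^ (i + d)) 1 = (f ^^ i) ((f ^^ d) 1)" by (simp only: funpow_add comp_apply)
    then show ?thesis using d by simp
  qed
  define c where "c = (\<Sum>i<d. P ((f ^^ i) 1))"
  have dM: "d dvd M" using dvd_d M_props one by blast
  define t where "t = M div d"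
  have Mdt: "M = d * t" using dM t_def by simp
  have t0: "t > 0" using Mdt M_props(1) by (cases t) auto
  have sumM: "(\<Sum>i<M. P ((f ^^ i) 1)) = t * c"
    using sum_periodic[of "\<lambda>i. P ((f ^^ i) 1)" d t, OF per] Mdt c_def by simp
  have tc: "(f ^^ (t * c)) y = y" if y: "y < N" for y
  proof -
    have y1: "(1 + y) mod N < N" using one by simp
    have "(f ^^ M) ((1 + y) mod N) = ((f ^^ M) 1 + (f ^^ (t * c)) y) mod N"
      using iter[OF one y, of M] sumM by simp
    then have "(1 + y) mod N = (1 + (f ^^ (t * c)) y) mod N"
      using M_props(2)[OF y1] M_props(2)[OF one] by simp
    from mod_cancel_left_lt[OF this y pow_range[OF y]] show ?thesis by simp
  qed
  have "M dvd t * c" using tc pow_id_dvd by blast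
  then have "t * d dvd t * c" using Mdt by (simp add: mult.commute)
  then have "d dvd c" using t0 by simp
  then obtain e where ce: "c = d * e" by blast
  have fd: "(f ^^ d) ((1 + y) mod N) = (1 + (f ^^ c) y) mod N" if "y < N" for y
    using iter[OF one that, of d] d c_def by simp
  have fdi: "(f ^^ (d * i)) ((1 + y) mod N) = (1 + (f ^^ (c * i)) y) mod N" if y: "y < N" for i y
  proof (induction i)
    case 0 then show ?case by simp
  next
    case (Suc i)
    have "(f ^^ (d * Suc i)) ((1 + y) mod N) = (f ^^ d) ((f ^^ (d * i)) ((1 + y) mod N))"
      by (simp only: mult_Suc_right funpow_add comp_apply)
    also have "\<dots> = (f ^^ d) ((1 + (f ^^ (c * i)) y) mod N)" using Suc by simp
    also have "\<dots> = (1 + (f ^^ c) ((f ^^ (c * i)) y)) mod N" by (rule fd[OF pow_range[OF y]])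
    also have "(f ^^ c) ((f ^^ (c * i)) y) = (f ^^ (c * Suc i)) y"
      by (simp only: mult_Suc_right funpow_add comp_apply)
    finally show ?case .
  qed
  have all: "\<forall>i. (f ^^ (d * i)) x = x" if "x < N" for x
    using that
  proof (induction x)
    case 0 then show ?case by simp
  next
    case (Suc x)
    then have x: "x < N" by simp
    show ?case
    proof
      fix i
      have "(f ^^ (d * i)) ((1 + x) mod N) = (1 + (f ^^ (c * i)) x) mod N" by (rule fdi[OF x])
      also have "(f ^^ (c * i)) x = x" using Suc x ce by (simp add: mult.assoc)
      finally show "(f ^^ (d * i)) (Suc x) = Suc x" using Suc by simp
    qed
  qed
  have "\<forall>x<N. (f ^^ d) x = x"
  proof (intro allI impI)
    fix x assume "x < N"
    from all[OF this] have "(f ^^ (d * 1)) x = x" by blast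
    then show "(f ^^ d) x = x" by simp
  qed
  then have "M dvd d" by (rule pow_id_dvd)
  then show ?thesis using dvd_d[OF j] by (rule dvd_trans)
qed

lemma M_lt_N:
  assumes N2: "N \<ge> 2"
  shows "M < N"
proof -
  have one: "1 < N" using N2 by simp
  have "\<not> inj_on (\<lambda>i. (f ^^ i) 1) {0..<N}"
  proof
    assume inj: "inj_on (\<lambda>i. (f ^^ i) 1) {0..<N}"
    have "(\<lambda>i. (f ^^ i) 1) ` {0..<N} \<subseteq> {1..<N}"
    proof
      fix z assume "z \<in> (\<lambda>i. (f ^^ i) 1) ` {0..<N}"
      then obtain i where z: "z = (f ^^ i) 1" by blast
      have "z < N" using z pow_range one by simp
      moreover have "z \<noteq> 0"
      proof
        assume "z = 0"
        then have "(f ^^ i) 1 = (f ^^ i) 0" using z by simp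
        then show False using pow_inj[OF one, of 0] one by simp
      qed
      ultimately show "z \<in> {1..<N}" by simp
    qed
    then have "card {0..<N} \<le> card {1..<N}" using card_inj_on_le[OF inj] by blast
    then show False using one by simp
  qed
  then obtain i j where ij: "i < N" "j < N" "i \<noteq> j" "(f ^^ i) 1 = (f ^^ j) 1"
    unfolding inj_on_def by auto
  have "\<exists>i j. i < j \<and> j < N \<and> (f ^^ i) 1 = (f ^^ j) 1"
  proof (cases "i < j")
    case True then show ?thesis using ij by blast
  next
    case False then have "j < i" using ij by simp
    then show ?thesis using ij by (intro exI[of _ j] exI[of _ i]) simp
  qed
  then obtain i j where ij: "i < j" "j < N" "(f ^^ i) 1 = (f ^^ j) 1" by blast
  have "(f ^^ i) ((f ^^ (j - i)) 1) = (f ^^ (i + (j - i))) 1" by (simp only: funpow_add comp_apply)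
  also have "\<dots> = (f ^^ i) 1" using ij by simp
  finally have "(f ^^ (j - i)) 1 = 1" using pow_inj pow_range one by blast
  then have "M dvd j - i" using orbit N2 by blast
  then have "M \<le> j - i" using ij by (intro dvd_imp_le) auto
  then show ?thesis using ij by simp
qed

lemma kernel_from:
  assumes ba: "b < a" "a < N" and Va: "Vx N f a i" and Vb: "Vx N f b i"
  shows "Addx N f (a - b)"
  unfolding Addx_def
proof (intro allI impI)
  fix y assume y: "y < N"
  define w where "w = (y + N - b) mod N"
  define w0 where "w0 = (N - b) mod N"
  have w: "w < N" and w0: "w0 < N" using ba w_def w0_def by auto
  have "(b + w) mod N = (b + (y + N - b)) mod N" unfolding w_def by (simp add: mod_add_right_eq)
  also have "b + (y + N - b) = y + N" using ba by simp
  finally have bw: "(b + w) mod N = y" using y by simp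
  have "(a + w) mod N = (a + (y + N - b)) mod N" unfolding w_def by (simp add: mod_add_right_eq)
  also have "a + (y + N - b) = (a - b + y) + N" using ba by simp
  finally have aw: "(a + w) mod N = (a - b + y) mod N" by simp
  have "(b + w0) mod N = (b + (N - b)) mod N" unfolding w0_def by (simp add: mod_add_right_eq)
  also have "b + (N - b) = N" using ba by simp
  finally have bw0: "(b + w0) mod N = 0" by simp
  have "(a + w0) mod N = (a + (N - b)) mod N" unfolding w0_def by (simp add: mod_add_right_eq)
  also have "a + (N - b) = (a - b) + N" using ba by simp
  also have "(a - b + N) mod N = (a - b) mod N" by (rule mod_add_self2)
  also have "\<dots> = a - b" using ba by simp
  finally have aw0: "(a + w0) mod N = a - b" .
  define F where "F = (f ^^ i) w"
  define F0 where "F0 = (f ^^ i) w0"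
  have "f ((a + w) mod N) = (f a + (f ^^ i) w) mod N" using Va w unfolding Vx_def by blast
  then have e1: "f ((a - b + y) mod N) = (f a + F) mod N" unfolding aw F_def .
  have "f ((b + w) mod N) = (f b + (f ^^ i) w) mod N" using Vb w unfolding Vx_def by blast
  then have e2: "f y = (f b + F) mod N" unfolding bw F_def .
  have "f ((a + w0) mod N) = (f a + (f ^^ i) w0) mod N" using Va w0 unfolding Vx_def by blast
  then have e3: "f (a - b) = (f a + F0) mod N" unfolding aw0 F0_def .
  have "f ((b + w0) mod N) = (f b + (f ^^ i) w0) mod N" using Vb w0 unfolding Vx_def by blast
  then have e4: "0 = (f b + F0) mod N" unfolding bw0 F0_def by simp
  have "(f (a - b) + f y) mod N = ((f a + F0) + (f b + F)) mod N" unfolding e3 e2 by (simp add: mod_add_eq)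
  also have "\<dots> = ((f a + F) + (f b + F0)) mod N" by (simp add: algebra_simps)
  also have "\<dots> = ((f a + F) + (f b + F0) mod N) mod N" by (simp add: mod_add_right_eq)
  also have "\<dots> = (f a + F) mod N" using e4 by simp
  finally show "f ((a - b + y) mod N) = (f (a - b) + f y) mod N" using e1 by simp
qed

lemma KER:
  assumes N2: "N \<ge> 2"
  shows "\<exists>d. 0 < d \<and> d < N \<and> Addx N f d"
proof (cases "is_identity_on N f")
  case True
  have "Addx N f 1" unfolding Addx_def
  proof (intro allI impI)
    fix y assume y: "y < N"
    have "(1 + y) mod N < N" using N2 by simp
    then show "f ((1 + y) mod N) = (f 1 + f y) mod N" using True y N2 by (simp add: is_identity_on_def)
  qed
  then show ?thesis using N2 by (intro exI[of _ 1]) auto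
next
  case False
  have "\<not> inj_on P {0..<N}"
  proof
    assume inj: "inj_on P {0..<N}"
    have "P ` {0..<N} \<subseteq> {1..<M}" using P_props(2,3) False by auto
    then have "card {0..<N} \<le> card {1..<M}" using card_inj_on_le[OF inj] by blast
    then show False using M_lt_N[OF N2] by simp
  qed
  then obtain a b where ab: "a < N" "b < N" "a \<noteq> b" "P a = P b"
    unfolding inj_on_def by auto
  have "\<exists>a b. b < a \<and> a < N \<and> P a = P b"
  proof (cases "b < a")
    case True then show ?thesis using ab by blast
  next
    case False then have "a < b" using ab by simp
    then show ?thesis using ab by (intro exI[of _ b] exI[of _ a]) simp
  qed
  then obtain a b where ab: "b < a" "a < N" "P a = P b" by blast
  have "Addx N f (a - b)"
    using kernel_from[OF ab(1,2) P_props(1)[OF ab(2)]] P_props(1)[of b] ab by simp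
  then show ?thesis using ab by (intro exI[of _ "a - b"]) auto
qed

lemma Add_add:
  assumes "Addx N f d" "Addx N f e" "d < N" "e < N"
  shows "Addx N f ((d + e) mod N)"
  unfolding Addx_def
proof (intro allI impI)
  fix y assume y: "y < N"
  have ey: "(e + y) mod N < N" using N_pos by simp
  have e0: "((d + e) mod N + y) mod N = (d + (e + y) mod N) mod N"
    by (simp add: mod_add_left_eq mod_add_right_eq add.assoc)
  have e1: "f ((d + (e + y) mod N) mod N) = (f d + f ((e + y) mod N)) mod N"
    using assms(1) ey unfolding Addx_def by blast
  have e2: "f ((e + y) mod N) = (f e + f y) mod N" using assms(2) y unfolding Addx_def by blast
  have e3: "f ((d + e) mod N) = (f d + f e) mod N" using assms(1) assms(4) unfolding Addx_def by blast
  show "f (((d + e) mod N + y) mod N) = (f ((d + e) mod N) + f y) mod N"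
    unfolding e0 e1 e2 e3 by (simp add: mod_add_left_eq mod_add_right_eq add.assoc)
qed

lemma Add_zero: "Addx N f 0"
  unfolding Addx_def using f_range by simp

lemma Add_mult:
  assumes "Addx N f d" "d < N"
  shows "Addx N f ((j * d) mod N) \<and> f ((j * d) mod N) = (j * f d) mod N"
proof (induction j)
  case 0 then show ?case using Add_zero by simp
next
  case (Suc j)
  have jd: "(j * d) mod N < N" using N_pos by simp
  have "(Suc j * d) mod N = (j * d + d) mod N" by (simp add: add.commute)
  then have eq: "(Suc j * d) mod N = ((j * d) mod N + d) mod N" by (simp add: mod_add_left_eq)
  have A: "Addx N f ((Suc j * d) mod N)"
    unfolding eq using Add_add[OF conjunct1[OF Suc] assms(1) jd assms(2)] .
  have "f (((j * d) mod N + d) mod N) = (f ((j * d) mod N) + f d) mod N"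
    using conjunct1[OF Suc] assms(2) unfolding Addx_def by blast
  then have "f ((Suc j * d) mod N) = ((j * f d) mod N + f d) mod N" using Suc eq by simp
  also have "\<dots> = (j * f d + f d) mod N" by (simp add: mod_add_left_eq)
  also have "j * f d + f d = Suc j * f d" by simp
  finally show ?case using A by simp
qed

lemma Add_all:
  assumes "Addx N f d" "d < N" "coprime d N" "x < N"
  shows "Addx N f x"
proof -
  obtain j where "[d * j = x] (mod N)" using cong_solve[OF assms(3)] by blast
  then have "(j * d) mod N = x" using assms(4) by (simp add: cong_def mult.commute)
  then show ?thesis using Add_mult[OF assms(1,2), of j] by simp
qed

lemma linear:
  assumes N2: "N \<ge> 2" and A: "\<forall>a<N. Addx N f a" and x: "x < N"
  shows "f x = (x * f 1) mod N"
proof -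
  have "Addx N f 1" using A N2 by simp
  then have "f ((x * 1) mod N) = (x * f 1) mod N" using Add_mult[of 1 x] N2 by simp
  then show ?thesis using x by simp
qed

lemma auto_P:
  assumes N2: "N \<ge> 2" and A: "\<forall>a<N. Addx N f a" and a: "a < N"
  shows "P a = 1"
proof (cases "is_identity_on N f")
  case True then show ?thesis by (simp add: skew_pi_def)
next
  case False
  have "Vx N f a 1" using A a unfolding Addx_def Vx_def by simp
  then have "P a = 1 mod M" using P_eq[OF a False] by simp
  moreover have "M \<noteq> 1" using False ident_iff by simp
  moreover have "M > 0" by (rule M_props)
  ultimately show ?thesis by simp
qed

lemma derived_auto:
  assumes N2: "N \<ge> 2" and A: "\<forall>a<N. Addx N f a"
  shows "Defs.derived N f = (\<lambda>a. a mod M)"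
proof
  fix a
  have "Defs.derived N f a = (\<Sum>i<a. P ((f ^^ i) 1)) mod M"
    using N2 by (simp add: Defs.derived_def skew_sigma_def)
  also have "(\<Sum>i<a. P ((f ^^ i) 1)) = (\<Sum>i<a. 1)"
    using auto_P[OF N2 A] pow_range N2 by (intro sum.cong) auto
  finally show "Defs.derived N f a = a mod M" by simp
qed

end

lemma skew_ord_mod: "M > 0 \<Longrightarrow> skew_ord M (\<lambda>a. a mod M) = 1"
  unfolding skew_ord_def by (intro Least_equality) auto

context skew
begin

lemma auto_chain:
  assumes N2: "N \<ge> 2" and A: "\<forall>a<N. Addx N f a" and ni: "\<not> is_identity_on N f"
  shows "fst (derive_step (N, f)) \<ge> 2" "fst (derive_step (derive_step (N, f))) = 1"
proof -
  have ds: "derive_step (N, f) = (M, \<lambda>a. a mod M)"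
    using derived_auto[OF N2 A] by (simp add: derive_step_def)
  have "M \<noteq> 1" using ni ident_iff by simp
  then show "fst (derive_step (N, f)) \<ge> 2" using ds M_props(1) by simp
  show "fst (derive_step (derive_step (N, f))) = 1"
    unfolding ds using skew_ord_mod M_props(1) by (simp add: derive_step_def)
qed

lemma ident_chain:
  assumes "is_identity_on N f"
  shows "fst (derive_step (N, f)) = 1"
  using assms ident_iff by (simp add: derive_step_def)

lemma complexity_auto:
  assumes N2: "N \<ge> 2" and A: "\<forall>a<N. Addx N f a"
  shows "complexity N f = (if is_identity_on N f then 0 else 1)"
proof (cases "is_identity_on N f")
  case True
  have "complexity N f = 0"
    by (rule complexity_eq) (use N2 ident_chain[OF True] in auto)
  then show ?thesis using True by simp
next
  case False
  have "complexity N f = 1"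
  proof (rule complexity_eq)
    show "\<forall>i\<le>1. 2 \<le> fst ((derive_step ^^ i) (N, f))"
      using N2 auto_chain[OF N2 A False] by (auto simp: le_Suc_eq)
    show "fst ((derive_step ^^ (1 + 1)) (N, f)) = 1"
      using auto_chain[OF N2 A False] by (simp add: numeral_2_eq_2)
  qed
  then show ?thesis using False by simp
qed

end

lemma fermat_all:
  fixes a p :: nat
  assumes p: "prime p"
  shows "[a ^ p = a] (mod p)"
proof (cases "p dvd a")
  case True
  have "a dvd a ^ p" by (rule dvd_power) (use prime_gt_0_nat[OF p] in auto)
  then have "p dvd a ^ p" using True by (rule dvd_trans[rotated])
  then show ?thesis using True by (simp add: cong_def dvd_eq_mod_eq_0)
next
  case False
  then have "[a ^ (p - 1) = 1] (mod p)" using fermat_theorem p by blast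
  then have "[a * a ^ (p - 1) = a * 1] (mod p)" by (rule cong_scalar_left)
  moreover have "a * a ^ (p - 1) = a ^ p" using p prime_gt_0_nat
    by (metis Suc_diff_1 power_Suc)
  ultimately show ?thesis by simp
qed

lemma pow_geom_nat: "(1 + c) ^ n = 1 + c * (\<Sum>i<n. (1 + c) ^ i)" for c n :: nat
  by (induction n) (simp_all add: algebra_simps)

lemma geom_one:
  fixes c p :: nat
  assumes p: "prime p" and c: "\<not> p dvd c"
  shows "[(\<Sum>i<p. (1 + c) ^ i) = 1] (mod p)"
proof -
  have "[1 + c * (\<Sum>i<p. (1 + c) ^ i) = 1 + c] (mod p)"
    using fermat_all[OF p, of "1 + c"] unfolding pow_geom_nat[of c p] .
  then have "[c * (\<Sum>i<p. (1 + c) ^ i) = c] (mod p)"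
    by (rule cong_add_lcancel_nat[THEN iffD1])
  then have "[c * (\<Sum>i<p. (1 + c) ^ i) = c * 1] (mod p)" by simp
  moreover have "coprime c p" using p c prime_imp_coprime_nat coprime_commute by blast
  ultimately show ?thesis using cong_mult_lcancel_nat by blast
qed

definition Dg :: "nat \<Rightarrow> nat \<Rightarrow> nat \<Rightarrow> nat \<Rightarrow> nat" where
  "Dg p u s a = (\<Sum>i<a. (u ^ i * s) mod p)"

definition gmap :: "nat \<Rightarrow> nat \<Rightarrow> nat \<Rightarrow> nat \<Rightarrow> nat \<Rightarrow> nat" where
  "gmap p k u s a = (a + k * Dg p u s a) mod (k * p)"

definition hmap :: "nat \<Rightarrow> nat \<Rightarrow> nat \<Rightarrow> nat" where
  "hmap p u a = (a * (u mod p)) mod p"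

locale gl =
  fixes p k u s :: nat
  assumes prime: "prime p" and cop: "coprime u p" and kdef: "k = ord p u"
    and k2: "k \<ge> 2" and s: "0 < s" "s < p"
begin

abbreviation "D \<equiv> Dg p u s"
abbreviation "g \<equiv> gmap p k u s"
abbreviation "h \<equiv> hmap p u"

lemma p2: "p \<ge> 2" using prime prime_ge_2_nat by blast

lemma cop': "coprime p u" using cop coprime_commute by blast

lemma uk: "[u ^ k = 1] (mod p)" using kdef ord by simp

lemma uexp: "[u ^ a = u ^ b] (mod p) \<longleftrightarrow> [a = b] (mod k)"
  using order_divides_expdiff[OF cop'] kdef by simp

lemma k_lt_p: "k < p"
proof -
  have "k dvd totient p" using order_divides_totient[OF cop'] kdef by simp
  then have "k dvd p - 1" using totient_prime[OF prime] by simp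
  moreover have "p - 1 > 0" using p2 by simp
  ultimately have "k \<le> p - 1" by (rule dvd_imp_le)
  then show ?thesis using p2 by simp
qed

lemma k_cop: "coprime k p"
proof -
  have "\<not> p dvd k" using k_lt_p k2 by (auto dest: dvd_imp_le)
  then show ?thesis using prime prime_imp_coprime_nat coprime_commute by blast
qed

lemma u_ne1: "\<not> [u = 1] (mod p)"
  using ord_eq_Suc_0_iff[of p u] kdef k2 by simp

lemma u_pos: "u \<ge> 1"
proof (rule ccontr)
  assume "\<not> u \<ge> 1" then have "u = 0" by simp
  then show False using cop p2 by simp
qed

lemma Dsplit: "[D (a + b) = D a + u ^ a * D b] (mod p)"
proof -
  have "D (a + b) = D a + (\<Sum>i<b. (u ^ (a + i) * s) mod p)"
    unfolding Dg_def by (rule sum_lessThan_add)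
  moreover have "[(\<Sum>i<b. (u ^ (a + i) * s) mod p) = (\<Sum>i<b. u ^ a * ((u ^ i * s) mod p))] (mod p)"
  proof (rule cong_sum)
    fix i
    show "[(u ^ (a + i) * s) mod p = u ^ a * ((u ^ i * s) mod p)] (mod p)"
      by (simp add: cong_def mod_mult_right_eq power_add mult.assoc)
  qed
  moreover have "(\<Sum>i<b. u ^ a * ((u ^ i * s) mod p)) = u ^ a * D b"
    unfolding Dg_def by (simp add: sum_distrib_left)
  ultimately show ?thesis using cong_add_lcancel_nat by (metis cong_add cong_refl)
qed

lemma Dk: "[D k = 0] (mod p)"
proof -
  have "u ^ k = 1 + (u - 1) * (\<Sum>i<k. u ^ i)"
    using pow_geom_nat[of "u - 1" k] u_pos by simp
  then have "[1 + (u - 1) * (\<Sum>i<k. u ^ i) = 1 + 0] (mod p)" using uk by simp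
  then have "[(u - 1) * (\<Sum>i<k. u ^ i) = 0] (mod p)"
    by (rule cong_add_lcancel_nat[THEN iffD1])
  then have "p dvd (u - 1) * (\<Sum>i<k. u ^ i)" by (simp add: cong_0_iff)
  moreover have "\<not> p dvd (u - 1)"
  proof
    assume "p dvd u - 1"
    then have "[u - 1 = 0] (mod p)" by (simp add: cong_0_iff)
    then have "[u - 1 + 1 = 0 + 1] (mod p)" by (rule cong_add) (rule cong_refl)
    then show False using u_ne1 u_pos by simp
  qed
  ultimately have dv: "p dvd (\<Sum>i<k. u ^ i)" using prime prime_dvd_mult_nat by blast
  have "[D k = (\<Sum>i<k. u ^ i * s)] (mod p)"
    unfolding Dg_def by (rule cong_sum) (simp add: cong_def)
  moreover have "(\<Sum>i<k. u ^ i * s) = (\<Sum>i<k. u ^ i) * s" by (simp add: sum_distrib_right)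
  moreover have "[(\<Sum>i<k. u ^ i) * s = 0] (mod p)" using dv by (simp add: cong_0_iff)
  ultimately show ?thesis by (metis cong_trans)
qed

lemma Dper: "[D (a + k * j) = D a] (mod p)"
proof (induction j)
  case 0 then show ?case by simp
next
  case (Suc j)
  have "[D (a + k * j + k) = D (a + k * j) + u ^ (a + k * j) * D k] (mod p)" by (rule Dsplit)
  moreover have "[u ^ (a + k * j) * D k = u ^ (a + k * j) * 0] (mod p)"
    using Dk by (rule cong_scalar_left)
  ultimately have "[D (a + k * j + k) = D (a + k * j)] (mod p)"
    by (metis add.right_neutral cong_add cong_refl cong_trans mult_0_right)
  moreover have "a + k * Suc j = a + k * j + k" by simp
  ultimately show ?case using Suc by (metis cong_trans)
qed

lemma Dmodk: "[D a = D (a mod k)] (mod p)"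
proof -
  show ?thesis using Dper[of "a mod k" "a div k"] by (simp add: cong_sym)
qed

lemma Dcongk: "[a = b] (mod k) \<Longrightarrow> [D a = D b] (mod p)"
  using Dmodk[of a] Dmodk[of b] unfolding cong_def by simp

lemma mulk: "[x = y] (mod p) \<Longrightarrow> (k * x) mod (k * p) = (k * y) mod (k * p)"
  by (simp add: cong_def mod_mult_mult1)

lemma g_modk: "[g b = b] (mod k)"
proof -
  have "g b mod k = (b + k * D b) mod k" unfolding gmap_def by (simp add: mod_mod_cancel)
  then show ?thesis by (simp add: cong_def)
qed

lemma g_pow: "b < k * p \<Longrightarrow> (g ^^ j) b = (b + j * k * D b) mod (k * p)"
proof (induction j)
  case 0 then show ?case by simp
next
  case (Suc j)
  define X where "X = (g ^^ j) b"
  have X: "X = (b + j * k * D b) mod (k * p)" using Suc X_def by simp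
  have "[X = b] (mod k)"
  proof -
    have "X mod k = (b + j * k * D b) mod k" unfolding X by (simp add: mod_mod_cancel)
    also have "b + j * k * D b = b + (j * D b) * k" by (simp add: algebra_simps)
    also have "(b + (j * D b) * k) mod k = b mod k" by (rule mod_mult_self1)
    finally show ?thesis by (simp add: cong_def)
  qed
  then have "(k * D X) mod (k * p) = (k * D b) mod (k * p)" using Dcongk mulk by blast
  then have "(X + k * D X) mod (k * p) = (X + k * D b) mod (k * p)" by (metis mod_add_right_eq)
  also have "\<dots> = (b + j * k * D b + k * D b) mod (k * p)" unfolding X by (simp add: mod_add_left_eq)
  also have "b + j * k * D b + k * D b = b + Suc j * k * D b" by (simp add: algebra_simps)
  finally have fin: "(X + k * D X) mod (k * p) = (b + Suc j * k * D b) mod (k * p)" .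
  have "(g ^^ Suc j) b = g X" by (simp add: X_def)
  also have "g X = (X + k * D X) mod (k * p)" by (simp only: gmap_def)
  finally show ?case using fin by simp
qed

lemma kp1: "1 < k * p"
proof -
  have "2 * 2 \<le> k * p" using k2 p2 by (rule mult_le_mono)
  then show ?thesis by simp
qed

lemma D1: "D 1 = s" unfolding Dg_def using s by simp

lemma g1_ne: "0 < y \<Longrightarrow> y < p \<Longrightarrow> (g ^^ y) 1 \<noteq> 1"
proof
  assume y: "0 < y" "y < p" and e: "(g ^^ y) 1 = 1"
  have "(g ^^ y) 1 = (1 + y * k * D 1) mod (k * p)" by (rule g_pow[OF kp1])
  then have "(1 + y * k * s) mod (k * p) = 1" using e D1 by simp
  then have "(1 + y * k * s) mod (k * p) = 1 mod (k * p)" using kp1 p2 by simp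
  then have "[1 + y * k * s = 1 + 0] (mod k * p)" unfolding cong_def by simp
  then have "[y * k * s = 0] (mod k * p)" by (rule cong_add_lcancel_nat[THEN iffD1])
  then have "k * p dvd y * k * s" by (simp add: cong_0_iff)
  then have "k * p dvd k * (y * s)" by (simp add: mult.assoc mult.left_commute)
  then have "p dvd y * s" using k2 by simp
  then have "p dvd y \<or> p dvd s" using prime prime_dvd_mult_nat by blast
  then show False using y s by (auto dest: dvd_imp_le)
qed

lemma ord_g: "skew_ord (k * p) g = p"
  unfolding skew_ord_def
proof (rule Least_equality)
  show "0 < p \<and> (\<forall>x<k * p. (g ^^ p) x = x)"
  proof (intro conjI allI impI)
    show "0 < p" using p2 by simp
    fix x assume x: "x < k * p"
    have "(g ^^ p) x = (x + (k * p) * D x) mod (k * p)" using g_pow[OF x, of p] by (simp add: mult.commute mult.left_commute)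
    then show "(g ^^ p) x = x" using x by simp
  qed
next
  fix y assume y: "0 < y \<and> (\<forall>x<k * p. (g ^^ y) x = x)"
  show "p \<le> y"
  proof (rule ccontr)
    assume "\<not> p \<le> y"
    then have "(g ^^ y) 1 \<noteq> 1" using g1_ne y by simp
    moreover have "(g ^^ y) 1 = 1" using y kp1 by simp
    ultimately show False by simp
  qed
qed

lemma kp0: "0 < k * p" using k2 p2 by simp

lemma g_not_ident: "\<not> is_identity_on (k * p) g"
proof
  assume "is_identity_on (k * p) g"
  then have "g 1 = 1" using kp1 by (simp add: is_identity_on_def)
  then show False using g1_ne[of 1] p2 by simp
qed

lemma g_lt: "g x < k * p"
  unfolding gmap_def using kp0 by simp

lemma g_V:
  assumes a: "a < k * p" and b: "b < k * p"
  shows "g ((a + b) mod (k * p)) = (g a + (g ^^ (u ^ a mod p)) b) mod (k * p)"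
proof -
  let ?m = "k * p"
  let ?i = "u ^ a mod p"
  define E where "E = D a + ?i * D b"
  have c1: "[D ((a + b) mod ?m) = D (a + b)] (mod p)"
    by (rule Dcongk) (simp add: cong_def mod_mod_cancel)
  have "[D a + u ^ a * D b = D a + ?i * D b] (mod p)"
    by (rule cong_add[OF cong_refl]) (simp add: cong_def mod_mult_left_eq)
  then have c2: "[D (a + b) = E] (mod p)" unfolding E_def using Dsplit[of a b] cong_trans by blast
  have kD: "[k * D ((a + b) mod ?m) = k * E] (mod ?m)"
    using mulk[OF cong_trans[OF c1 c2]] by (simp add: cong_def)
  have L1: "[g ((a + b) mod ?m) = (a + b) mod ?m + k * D ((a + b) mod ?m)] (mod ?m)"
    by (simp add: gmap_def cong_def)
  have L2: "[(a + b) mod ?m + k * D ((a + b) mod ?m) = a + b + k * E] (mod ?m)"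
    by (rule cong_add[OF _ kD]) (simp add: cong_def)
  have L: "[g ((a + b) mod ?m) = a + b + k * E] (mod ?m)" using cong_trans[OF L1 L2] .
  have R1: "[g a = a + k * D a] (mod ?m)" by (simp add: gmap_def cong_def)
  have R2: "[(g ^^ ?i) b = b + ?i * k * D b] (mod ?m)" using g_pow[OF b, of ?i] by (simp add: cong_def)
  have R3: "[(g a + (g ^^ ?i) b) mod ?m = g a + (g ^^ ?i) b] (mod ?m)" by (simp add: cong_def)
  have R4: "[g a + (g ^^ ?i) b = a + k * D a + (b + ?i * k * D b)] (mod ?m)"
    by (rule cong_add[OF R1 R2])
  have R5: "a + k * D a + (b + ?i * k * D b) = a + b + k * E"
    unfolding E_def by (simp add: algebra_simps)
  have R: "[(g a + (g ^^ ?i) b) mod ?m = a + b + k * E] (mod ?m)"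
    using cong_trans[OF R3 R4] R5 by simp
  have "[g ((a + b) mod ?m) = (g a + (g ^^ ?i) b) mod ?m] (mod ?m)"
    using cong_trans[OF L cong_sym[OF R]] .
  then show ?thesis using g_lt kp1 by (simp add: cong_def)
qed

lemma ua_range: "u ^ a mod p \<in> {1..<p}"
proof -
  have "coprime (u ^ a) p" using cop by simp
  have "\<not> p dvd u ^ a"
  proof
    assume "p dvd u ^ a"
    then have "is_unit p" using coprime_common_divisor[OF \<open>coprime (u ^ a) p\<close> _ dvd_refl] by blast
    then show False using p2 by simp
  qed
  then have "u ^ a mod p \<noteq> 0" by (simp add: dvd_eq_mod_eq_0)
  then show ?thesis using p2 by simp
qed

lemma pi_g:
  assumes a: "a < k * p"
  shows "skew_pi (k * p) g a = u ^ a mod p"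
proof -
  let ?m = "k * p"
  let ?i = "u ^ a mod p"
  have "(THE i. i \<in> {1..<skew_ord ?m g} \<and> (\<forall>b<?m. g ((a + b) mod ?m) = (g a + (g ^^ i) b) mod ?m)) = ?i"
  proof (rule the_equality)
    show "?i \<in> {1..<skew_ord ?m g} \<and> (\<forall>b<?m. g ((a + b) mod ?m) = (g a + (g ^^ ?i) b) mod ?m)"
      using ua_range ord_g g_V a by simp
  next
    fix i assume i: "i \<in> {1..<skew_ord ?m g} \<and> (\<forall>b<?m. g ((a + b) mod ?m) = (g a + (g ^^ i) b) mod ?m)"
    have ip: "i < p" using i ord_g by simp
    have e1: "g ((a + 1) mod ?m) = (g a + (g ^^ i) 1) mod ?m" using i kp1 by blast
    have e2: "g ((a + 1) mod ?m) = (g a + (g ^^ ?i) 1) mod ?m" using g_V[OF a kp1] .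
    have gi: "(g ^^ i) 1 = (1 + i * k * s) mod ?m" using g_pow[OF kp1, of i] D1 by simp
    have gi': "(g ^^ ?i) 1 = (1 + ?i * k * s) mod ?m" using g_pow[OF kp1, of ?i] D1 by simp
    have "(g ^^ i) 1 = (g ^^ ?i) 1"
      using mod_cancel_left_lt[of "g a" "(g ^^ i) 1" ?m "(g ^^ ?i) 1"] e1 e2 gi gi' kp0 by simp
    then have "[1 + i * k * s = 1 + ?i * k * s] (mod ?m)" using gi gi' by (simp add: cong_def)
    then have "[i * k * s = ?i * k * s] (mod ?m)" by (rule cong_add_lcancel_nat[THEN iffD1])
    then have "(k * (i * s)) mod (k * p) = (k * (?i * s)) mod (k * p)"
      by (simp add: cong_def mult.commute mult.left_commute)
    then have "k * ((i * s) mod p) = k * ((?i * s) mod p)" by (simp add: mod_mult_mult1)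
    then have "[i * s = ?i * s] (mod p)" using k2 by (simp add: cong_def)
    moreover have "coprime s p"
    proof -
      have "\<not> p dvd s" using s by (auto dest: dvd_imp_le)
      then show ?thesis using prime prime_imp_coprime_nat coprime_commute by blast
    qed
    ultimately have "[i = ?i] (mod p)" using cong_mult_rcancel_nat by blast
    then show "i = ?i" using ip by (simp add: cong_def)
  qed
  then show ?thesis using g_not_ident by (simp add: skew_pi_def)
qed

lemma derived_g: "Defs.derived (k * p) g = h"
proof
  fix a
  have "Defs.derived (k * p) g a = (\<Sum>i<a. skew_pi (k * p) g ((g ^^ i) 1)) mod p"
    using kp1 ord_g by (simp add: Defs.derived_def skew_sigma_def)
  also have "(\<Sum>i<a. skew_pi (k * p) g ((g ^^ i) 1)) = (\<Sum>i<a. u mod p)"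
  proof (rule sum.cong)
    fix i
    have geq: "(g ^^ i) 1 = (1 + i * k * D 1) mod (k * p)" by (rule g_pow[OF kp1])
    have gi: "(g ^^ i) 1 < k * p" unfolding geq using kp0 by simp
    have "(g ^^ i) 1 mod k = (1 + i * k * D 1) mod k" unfolding geq by (simp add: mod_mod_cancel)
    also have "1 + i * k * D 1 = 1 + (i * D 1) * k" by (simp add: algebra_simps)
    also have "(1 + (i * D 1) * k) mod k = 1 mod k" by (rule mod_mult_self1)
    finally have "[(g ^^ i) 1 = 1] (mod k)" by (simp add: cong_def)
    then have "[u ^ ((g ^^ i) 1) = u ^ 1] (mod p)" using uexp by blast
    then show "skew_pi (k * p) g ((g ^^ i) 1) = u mod p" using pi_g[OF gi] by (simp add: cong_def)
  qed simp
  finally show "Defs.derived (k * p) g a = h a" by (simp add: hmap_def)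
qed

lemma chain_g: "derive_step (k * p, g) = (p, h)"
  by (simp add: derive_step_def ord_g derived_g)

lemma h_add: "h ((a + b) mod p) = (h a + h b) mod p"
  unfolding hmap_def by (simp add: mod_mult_left_eq mod_add_eq distrib_right)

lemma h_skew: "skew_morphism p h"
  unfolding skew_morphism_def
proof (intro conjI)
  show "1 \<le> p" using p2 by simp
  show "h 0 = 0" by (simp add: hmap_def)
  have inj: "inj_on h {0..<p}"
  proof (rule inj_onI)
    fix x y assume x: "x \<in> {0..<p}" and y: "y \<in> {0..<p}" and e: "h x = h y"
    then have "(x * u) mod p = (y * u) mod p" by (simp add: hmap_def mod_mult_right_eq)
    then have "[x * u = y * u] (mod p)" by (simp add: cong_def)
    then have "[x = y] (mod p)" using cong_mult_rcancel_nat cop by blast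
    then show "x = y" using x y by (simp add: cong_def)
  qed
  have sub: "h ` {0..<p} \<subseteq> {0..<p}" using p2 by (auto simp: hmap_def)
  have "h ` {0..<p} = {0..<p}"
    by (rule card_subset_eq) (use sub card_image[OF inj] in auto)
  then show "bij_betw h {0..<p} {0..<p}" using inj by (simp add: bij_betw_def)
  show "\<forall>a<p. \<exists>i. \<forall>b<p. h ((a + b) mod p) = (h a + (h ^^ i) b) mod p"
    using h_add by (intro allI impI exI[of _ 1]) simp
qed

lemma h_additive: "\<forall>a<p. Addx p h a"
  unfolding Addx_def using h_add by simp

lemma h_not_ident: "\<not> is_identity_on p h"
proof
  assume "is_identity_on p h"
  then have "h 1 = 1" using p2 by (simp add: is_identity_on_def)
  then have "u mod p = 1" by (simp add: hmap_def)
  then show False using u_ne1 p2 by (simp add: cong_def)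
qed

lemma chain_h: "fst (derive_step (p, h)) \<ge> 2" "fst (derive_step (derive_step (p, h))) = 1"
proof -
  interpret hs: skew p h by unfold_locales (rule h_skew)
  show "fst (derive_step (p, h)) \<ge> 2" "fst (derive_step (derive_step (p, h))) = 1"
    using hs.auto_chain[OF p2 h_additive h_not_ident] by auto
qed

end

context skew
begin

lemma P_add_kernel:
  assumes A: "Addx N f a" and a: "a < N" and x: "x < N"
  shows "Vx N f ((a + x) mod N) (P x)"
  unfolding Vx_def
proof (intro allI impI)
  fix z assume z: "z < N"
  have xz: "(x + z) mod N < N" using N_pos by simp
  have e0: "((a + x) mod N + z) mod N = (a + (x + z) mod N) mod N"
    by (simp add: mod_add_left_eq mod_add_right_eq add.assoc)
  have e1: "f ((a + (x + z) mod N) mod N) = (f a + f ((x + z) mod N)) mod N"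
    using A xz unfolding Addx_def by blast
  have e2: "f ((x + z) mod N) = (f x + (f ^^ P x) z) mod N"
    using P_props(1)[OF x] z unfolding Vx_def by blast
  have e3: "f ((a + x) mod N) = (f a + f x) mod N" using A x unfolding Addx_def by blast
  show "f (((a + x) mod N + z) mod N) = (f ((a + x) mod N) + (f ^^ P x) z) mod N"
    unfolding e0 e1 e2 e3 by (simp add: mod_add_left_eq mod_add_right_eq add.assoc)
qed

lemma P_kernel:
  assumes A: "Addx N f a" and a: "a < N" and x: "x < N" and ni: "\<not> is_identity_on N f"
  shows "P ((a + x) mod N) = P x"
proof -
  have "(a + x) mod N < N" using N_pos by simp
  then have "P ((a + x) mod N) = P x mod M" using P_eq ni P_add_kernel[OF A a x] by blast
  then show ?thesis using P_props(3)[OF x ni] by simp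
qed

end

definition redp :: "nat \<Rightarrow> (nat \<Rightarrow> nat) \<Rightarrow> nat \<Rightarrow> nat" where
  "redp p \<phi> r = \<phi> r mod p"

locale psq = skew "p^2" \<phi> for p :: nat and \<phi> +
  assumes prime: "prime p" and oddp: "odd p"
    and nonadd: "\<not> (\<forall>a<p^2. Addx (p^2) \<phi> a)"
begin

abbreviation "n \<equiv> p^2"
abbreviation "fb \<equiv> redp p \<phi>"

lemma p3: "p \<ge> 3"
proof -
  have "p \<ge> 2" using prime prime_ge_2_nat by blast
  moreover have "p \<noteq> 2" using oddp by auto
  ultimately show ?thesis by presburger
qed

lemma p0: "p > 0" using p3 by simp

lemma n_eq: "n = p * p" by (simp add: power2_eq_square)

lemma n0: "0 < n" using p0 by simp

lemma n2: "n \<ge> 2"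
proof -
  have "3 * 3 \<le> p * p" by (rule mult_le_mono[OF p3 p3])
  then show ?thesis using n_eq by simp
qed

lemma p_lt_n: "p < n"
proof -
  have "p * 1 < p * p" using p3 by simp
  then show ?thesis using n_eq by simp
qed

lemma ni: "\<not> is_identity_on n \<phi>"
proof
  assume idt: "is_identity_on n \<phi>"
  have "\<forall>a<n. Addx n \<phi> a" unfolding Addx_def
  proof (intro allI impI)
    fix a y assume a: "a < n" and y: "y < n"
    have "(a + y) mod n < n" using n0 by simp
    then show "\<phi> ((a + y) mod n) = (\<phi> a + \<phi> y) mod n" using idt a y by (simp add: is_identity_on_def)
  qed
  then show False using nonadd by blast
qed

lemma Addp: "Addx n \<phi> p"
proof -
  obtain d where d: "0 < d" "d < n" "Addx n \<phi> d" using KER[OF n2] by blast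
  have "\<not> coprime d n"
  proof
    assume "coprime d n"
    then have "\<forall>a<n. Addx n \<phi> a" using Add_all[OF d(3) d(2)] by blast
    then show False using nonadd by blast
  qed
  then have pd: "p dvd d" using prime_imp_power_coprime[OF prime, of d 2] by blast
  then obtain e where e: "d = p * e" by blast
  have e0: "0 < e" using d e by simp
  have ep: "e < p" using d e n_eq by simp
  have "\<not> p dvd e" using e0 ep by (auto dest: dvd_imp_le)
  then have "coprime e p" using prime prime_imp_coprime_nat coprime_commute by blast
  then obtain j where j: "[e * j = 1] (mod p)" using cong_solve_coprime_nat by auto
  have "(j * d) mod n = (p * (e * j)) mod (p * p)" using e n_eq by (simp add: algebra_simps)
  also have "\<dots> = p * ((e * j) mod p)" by (rule mod_mult_mult1)
  also have "(e * j) mod p = 1" using j p3 by (simp add: cong_def)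
  finally have "(j * d) mod n = p" by simp
  then show ?thesis using Add_mult[OF d(3) d(2), of j] by simp
qed

lemma Addjp: "Addx n \<phi> ((j * p) mod n) \<and> \<phi> ((j * p) mod n) = (j * \<phi> p) mod n"
  using Add_mult[OF Addp p_lt_n] .

lemma v_ex: "\<exists>v. \<phi> p = p * v \<and> 0 < v \<and> v < p"
proof -
  have "\<phi> ((p * p) mod n) = (p * \<phi> p) mod n" using conjunct2[OF Addjp[of p]] .
  then have "(p * \<phi> p) mod (p * p) = 0" using n_eq by simp
  then have "p * p dvd p * \<phi> p" by (simp add: dvd_eq_mod_eq_0)
  then have "p dvd \<phi> p" using p0 by simp
  then obtain v where v: "\<phi> p = p * v" by blast
  have "\<phi> p \<noteq> 0"
  proof
    assume "\<phi> p = 0"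
    then have "\<phi> p = \<phi> 0" by simp
    then have "p = 0" using f_inj p_lt_n n2 by (metis less_le_trans zero_less_numeral le_less)
    then show False using p0 by simp
  qed
  then have "0 < v" using v by simp
  moreover have "v < p"
  proof -
    have "\<phi> p < n" using f_range p_lt_n by simp
    then show ?thesis using v n_eq p0 by simp
  qed
  ultimately show ?thesis using v by blast
qed

definition v where "v = (SOME v. \<phi> p = p * v \<and> 0 < v \<and> v < p)"

lemma v: "\<phi> p = p * v" "0 < v" "v < p"
  using someI_ex[OF v_ex] unfolding v_def by auto

lemma shift:
  assumes x: "x < n"
  shows "\<phi> ((x + j * p) mod n) = (\<phi> x + j * v * p) mod n"
proof -
  have "\<phi> (((j * p) mod n + x) mod n) = (\<phi> ((j * p) mod n) + \<phi> x) mod n"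
    using Addjp[of j] x unfolding Addx_def by blast
  moreover have "((j * p) mod n + x) mod n = (x + j * p) mod n"
    by (metis add.commute mod_add_right_eq)
  moreover have "(\<phi> ((j * p) mod n) + \<phi> x) mod n = (\<phi> x + j * v * p) mod n"
  proof -
    have "\<phi> ((j * p) mod n) = (j * \<phi> p) mod n" by (rule conjunct2[OF Addjp])
    then have "(\<phi> ((j * p) mod n) + \<phi> x) mod n = (\<phi> x + j * \<phi> p) mod n"
      by (metis add.commute mod_add_right_eq)
    moreover have "j * \<phi> p = j * v * p" using v(1) by simp
    ultimately show ?thesis by simp
  qed
  ultimately show ?thesis by simp
qed

lemma resmod:
  assumes x: "x < n"
  shows "\<phi> x mod p = \<phi> (x mod p) mod p"
proof -
  have xm: "x mod p < n" using p_lt_n p0 by (meson mod_less_divisor less_trans)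
  have "\<phi> ((x mod p + (x div p) * p) mod n) = (\<phi> (x mod p) + (x div p) * v * p) mod n"
    by (rule shift[OF xm])
  moreover have "(x mod p + (x div p) * p) mod n = x" using x by simp
  ultimately have "\<phi> x mod p = ((\<phi> (x mod p) + (x div p) * v * p) mod n) mod p" by simp
  also have "\<dots> = (\<phi> (x mod p) + (x div p * v) * p) mod p" using n_eq by (simp add: mod_mod_cancel)
  also have "\<dots> = \<phi> (x mod p) mod p" by (rule mod_mult_self1)
  finally show ?thesis .
qed


lemma fb_pow:
  assumes r: "r < p"
  shows "(fb ^^ i) r = (\<phi> ^^ i) r mod p"
proof (induction i)
  case 0 then show ?case using r by simp
next
  case (Suc i)
  have rn: "r < n" using r p_lt_n by simp
  have "(fb ^^ Suc i) r = fb ((fb ^^ i) r)" by simp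
  also have "\<dots> = fb ((\<phi> ^^ i) r mod p)" using Suc by simp
  also have "\<dots> = \<phi> ((\<phi> ^^ i) r mod p) mod p" by (simp add: redp_def)
  also have "\<dots> = \<phi> ((\<phi> ^^ i) r) mod p" using resmod[OF pow_range[OF rn]] by simp
  finally show ?case by simp
qed

lemma fb_skew: "skew_morphism p fb"
  unfolding skew_morphism_def
proof (intro conjI)
  show "1 \<le> p" using p0 by simp
  show "fb 0 = 0" by (simp add: redp_def)
  have img: "fb ` {0..<p} = {0..<p}"
  proof
    show "fb ` {0..<p} \<subseteq> {0..<p}" using p0 by (auto simp: redp_def)
    show "{0..<p} \<subseteq> fb ` {0..<p}"
    proof
      fix \<rho> assume "\<rho> \<in> {0..<p}"
      then have \<rho>: "\<rho> < p" by simp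
      then have "\<rho> < n" using p_lt_n by simp
      then obtain x where x: "x < n" "\<phi> x = \<rho>" using f_surj by blast
      have "fb (x mod p) = \<phi> (x mod p) mod p" by (simp add: redp_def)
      also have "\<dots> = \<phi> x mod p" using resmod[OF x(1)] by simp
      also have "\<dots> = \<rho>" using x \<rho> by simp
      finally have "fb (x mod p) = \<rho>" .
      moreover have "x mod p \<in> {0..<p}" using p0 by simp
      ultimately show "\<rho> \<in> fb ` {0..<p}" by blast
    qed
  qed
  then have "inj_on fb {0..<p}" by (intro eq_card_imp_inj_on) auto
  then show "bij_betw fb {0..<p} {0..<p}" using img by (simp add: bij_betw_def)
  show "\<forall>a<p. \<exists>i. \<forall>b<p. fb ((a + b) mod p) = (fb a + (fb ^^ i) b) mod p"
  proof (intro allI impI)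
    fix a assume a: "a < p"
    have an: "a < n" using a p_lt_n by simp
    show "\<exists>i. \<forall>b<p. fb ((a + b) mod p) = (fb a + (fb ^^ i) b) mod p"
    proof (intro exI allI impI)
      fix b assume b: "b < p"
      have bn: "b < n" using b p_lt_n by simp
      have abn: "a + b < n"
      proof -
        have "a + b < p + p" using a b by simp
        also have "p + p \<le> p * p" using p3 by (simp add: mult_2[symmetric] mult_le_mono)
        finally show ?thesis using n_eq by simp
      qed
      have "fb ((a + b) mod p) = \<phi> ((a + b) mod p) mod p" by (simp add: redp_def)
      also have "\<dots> = \<phi> (a + b) mod p" using resmod[OF abn] by simp
      also have "\<phi> (a + b) = \<phi> ((a + b) mod n)" using abn by simp
      also have "\<dots> = (\<phi> a + (\<phi> ^^ P a) b) mod n" using P_props(1)[OF an] bn unfolding Vx_def by blast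
      also have "\<dots> mod p = (\<phi> a + (\<phi> ^^ P a) b) mod p" using n_eq by (simp add: mod_mod_cancel)
      also have "\<dots> = (fb a + (fb ^^ P a) b) mod p"
        using fb_pow[OF b] by (simp add: redp_def mod_add_eq)
      finally show "fb ((a + b) mod p) = (fb a + (fb ^^ P a) b) mod p" .
    qed
  qed
qed

lemma fb_linear: "x < p \<Longrightarrow> fb x = (x * fb 1) mod p"
proof -
  assume x: "x < p"
  interpret fs: skew p fb by unfold_locales (rule fb_skew)
  have p2: "p \<ge> 2" using p3 by simp
  obtain d where d: "0 < d" "d < p" "Addx p fb d" using fs.KER[OF p2] by blast
  have "\<not> p dvd d" using d by (auto dest: dvd_imp_le)
  then have "coprime d p" using prime prime_imp_coprime_nat coprime_commute by blast
  then have "\<forall>a<p. Addx p fb a" using fs.Add_all[OF d(3) d(2)] by blast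
  then show ?thesis using fs.linear[OF p2 _ x] by blast
qed

definition u where "u = \<phi> 1 mod p"

lemma phi_modp: "x < n \<Longrightarrow> \<phi> x mod p = (x * u) mod p"
proof -
  assume x: "x < n"
  have "\<phi> x mod p = fb (x mod p)" using resmod[OF x] by (simp add: redp_def)
  also have "\<dots> = ((x mod p) * fb 1) mod p" using fb_linear p0 by simp
  also have "fb 1 = u" by (simp add: redp_def u_def)
  finally show ?thesis by (simp add: mod_mult_left_eq)
qed

lemma u_cop: "coprime u p"
proof -
  have u1: "u < p" using p0 by (simp add: u_def)
  have "u \<noteq> 0"
  proof
    assume "u = 0"
    then have "fb 1 = fb 0" by (simp add: u_def redp_def)
    moreover have "inj_on fb {0..<p}" using fb_skew by (simp add: skew_morphism_def bij_betw_def)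
    ultimately show False using p3 by (auto dest: inj_onD)
  qed
  then have "\<not> p dvd u" using u1 by (auto dest: dvd_imp_le)
  then show ?thesis using prime prime_imp_coprime_nat coprime_commute by blast
qed

lemma pow_modp: "x < n \<Longrightarrow> (\<phi> ^^ i) x mod p = (u ^ i * x) mod p"
proof (induction i)
  case 0 then show ?case by simp
next
  case (Suc i)
  have "(\<phi> ^^ Suc i) x mod p = \<phi> ((\<phi> ^^ i) x) mod p" by simp
  also have "\<dots> = ((\<phi> ^^ i) x * u) mod p" using phi_modp pow_range Suc by blast
  also have "\<dots> = (((\<phi> ^^ i) x mod p) * u) mod p" by (simp add: mod_mult_left_eq)
  also have "\<dots> = ((u ^ i * x) mod p * u) mod p" using Suc by simp
  also have "\<dots> = (u ^ i * x * u) mod p" by (rule mod_mult_left_eq)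
  also have "u ^ i * x * u = u ^ Suc i * x" by (simp add: algebra_simps)
  finally show ?case .
qed

lemma p_dvd_n: "p dvd n" by simp

lemma modn_modp: "(a mod n) mod p = a mod p"
  by (rule mod_mod_cancel[OF p_dvd_n])

lemma cong_modn: "[a mod n = a] (mod p)"
  by (simp add: cong_def modn_modp)

definition k where "k = ord p u"

lemma cop': "coprime p u" using u_cop coprime_commute by blast

lemma k_pos: "k > 0" using cop' ord_gt_0_iff k_def by simp

lemma uk: "[u ^ k = 1] (mod p)" using k_def ord by simp

lemma uexp: "[u ^ a = u ^ b] (mod p) \<longleftrightarrow> [a = b] (mod k)"
  using order_divides_expdiff[OF cop'] k_def by simp

lemma uk_dvd: "[u ^ a = 1] (mod p) \<longleftrightarrow> k dvd a"
  using ord_divides k_def by simp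

lemma k_lt_p: "k < p"
proof -
  have "k dvd totient p" using order_divides_totient[OF cop'] k_def by simp
  then have "k dvd p - 1" using totient_prime[OF prime] by simp
  moreover have "p - 1 > 0" using p3 by simp
  ultimately have "k \<le> p - 1" by (rule dvd_imp_le)
  then show ?thesis using p3 by simp
qed

lemma Pk:
  assumes x: "x < n"
  shows "[P x = 1] (mod k)"
proof -
  have one: "1 < n" using n2 by simp
  have x1: "(x + 1) mod n < n" using n0 by simp
  have V: "\<phi> ((x + 1) mod n) = (\<phi> x + (\<phi> ^^ P x) 1) mod n"
    using P_props(1)[OF x] one unfolding Vx_def by blast
  have c1: "[\<phi> ((x + 1) mod n) = (x + 1) * u] (mod p)"
  proof -
    have "\<phi> ((x + 1) mod n) mod p = (((x + 1) mod n) * u) mod p" using phi_modp[OF x1] .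
    also have "\<dots> = ((((x + 1) mod n) mod p) * u) mod p" by (simp add: mod_mult_left_eq)
    also have "\<dots> = (((x + 1) mod p) * u) mod p" by (simp add: modn_modp)
    also have "\<dots> = ((x + 1) * u) mod p" by (simp add: mod_mult_left_eq)
    finally show ?thesis by (simp add: cong_def)
  qed
  have c2: "[\<phi> ((x + 1) mod n) = \<phi> x + (\<phi> ^^ P x) 1] (mod p)"
    unfolding V by (rule cong_modn)
  have c3: "[\<phi> x = x * u] (mod p)" using phi_modp[OF x] by (simp add: cong_def)
  have c4: "[(\<phi> ^^ P x) 1 = u ^ P x] (mod p)" using pow_modp[OF one, of "P x"] by (simp add: cong_def)
  have "[x * u + u = x * u + u ^ P x] (mod p)"
  proof -
    have "[(x + 1) * u = \<phi> x + (\<phi> ^^ P x) 1] (mod p)" using cong_trans[OF cong_sym[OF c1] c2] .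
    moreover have "[\<phi> x + (\<phi> ^^ P x) 1 = x * u + u ^ P x] (mod p)" by (rule cong_add[OF c3 c4])
    ultimately have "[(x + 1) * u = x * u + u ^ P x] (mod p)" by (rule cong_trans)
    then show ?thesis by (simp add: algebra_simps)
  qed
  then have "[u = u ^ P x] (mod p)" by (rule cong_add_lcancel_nat[THEN iffD1])
  then have "[u ^ 1 = u ^ P x] (mod p)" by simp
  then have "[1 = P x] (mod k)" using uexp by blast
  then show ?thesis by (rule cong_sym)
qed

lemma kM: "k dvd M"
proof -
  have one: "1 < n" using n2 by simp
  have "(\<phi> ^^ M) 1 = 1" using M_props(2)[OF one] .
  then have "(u ^ M * 1) mod p = 1 mod p" using pow_modp[OF one, of M] by simp
  then have "[u ^ M = 1] (mod p)" by (simp add: cong_def)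
  then show ?thesis using uk_dvd by blast
qed

abbreviation "\<psi> \<equiv> \<phi> ^^ k"

lemma psi_modp: "x < n \<Longrightarrow> \<psi> x mod p = x mod p"
proof -
  assume x: "x < n"
  have "\<psi> x mod p = (u ^ k * x) mod p" using pow_modp[OF x] .
  also have "\<dots> = ((u ^ k mod p) * x) mod p" by (simp add: mod_mult_left_eq)
  also have "u ^ k mod p = 1" using uk p3 by (simp add: cong_def)
  finally show ?thesis by simp
qed

lemma Ssum_k:
  assumes x: "x < n"
  shows "k dvd (\<Sum>i<k. P ((\<phi> ^^ i) x))"
proof -
  have "[(\<Sum>i<k. P ((\<phi> ^^ i) x)) = (\<Sum>i<k. 1)] (mod k)"
    by (rule cong_sum) (use Pk pow_range x in blast)
  then have "[(\<Sum>i<k. P ((\<phi> ^^ i) x)) = 0] (mod k)" by (simp add: cong_def)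
  then show ?thesis by (simp add: cong_0_iff)
qed

lemma psi_exp:
  assumes x: "x < n" and y: "y < n"
  shows "\<exists>e. \<psi> ((x + y) mod n) = (\<psi> x + (\<psi> ^^ e) y) mod n"
proof -
  obtain e where e: "(\<Sum>i<k. P ((\<phi> ^^ i) x)) = k * e" using Ssum_k[OF x] by blast
  have "\<psi> ((x + y) mod n) = (\<psi> x + (\<phi> ^^ (k * e)) y) mod n" using iter[OF x y, of k] e by simp
  also have "\<phi> ^^ (k * e) = \<psi> ^^ e" by (simp add: funpow_mult)
  finally show ?thesis by blast
qed

lemma fixgen:
  assumes a: "a < n" and ca: "coprime a p" and fa: "\<psi> a = a"
  shows "\<forall>x<n. \<psi> x = x"
proof -
  have pa: "(\<psi> ^^ e) a = a" for e by (induction e) (simp_all add: fa)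
  have step: "\<psi> ((x + a) mod n) = (\<psi> x + a) mod n" if x: "x < n" for x
  proof -
    obtain e where "\<psi> ((x + a) mod n) = (\<psi> x + (\<psi> ^^ e) a) mod n" using psi_exp[OF x a] by blast
    then show ?thesis using pa by simp
  qed
  have mult: "\<psi> ((j * a) mod n) = (j * a) mod n" for j
  proof (induction j)
    case 0 then show ?case by simp
  next
    case (Suc j)
    have ja: "(j * a) mod n < n" using n0 by simp
    have "(Suc j * a) mod n = (j * a + a) mod n" by (simp add: add.commute)
    also have "\<dots> = ((j * a) mod n + a) mod n" by (rule mod_add_left_eq[symmetric])
    finally have "(Suc j * a) mod n = ((j * a) mod n + a) mod n" .
    then have "\<psi> ((Suc j * a) mod n) = (\<psi> ((j * a) mod n) + a) mod n" using step[OF ja] by simp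
    also have "\<dots> = ((j * a) mod n + a) mod n" using Suc by simp
    also have "\<dots> = (j * a + a) mod n" by (rule mod_add_left_eq)
    also have "\<dots> = (Suc j * a) mod n" by (simp add: add.commute)
    finally show ?case .
  qed
  have can: "coprime a n" using ca by simp
  show ?thesis
  proof (intro allI impI)
    fix x assume x: "x < n"
    obtain j where "[a * j = x] (mod n)" using cong_solve[OF can] by blast
    then have "(j * a) mod n = x" using x by (simp add: cong_def mult.commute)
    then show "\<psi> x = x" using mult[of j] by simp
  qed
qed

lemma shift_pow:
  assumes x: "x < n"
  shows "(\<phi> ^^ i) ((x + j * p) mod n) = ((\<phi> ^^ i) x + j * v ^ i * p) mod n"
proof (induction i)
  case 0 then show ?case by simp
next
  case (Suc i)
  have "(\<phi> ^^ Suc i) ((x + j * p) mod n) = \<phi> (((\<phi> ^^ i) x + (j * v ^ i) * p) mod n)"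
    using Suc by (simp add: mult.assoc)
  also have "\<dots> = (\<phi> ((\<phi> ^^ i) x) + (j * v ^ i) * v * p) mod n"
    by (rule shift[OF pow_range[OF x]])
  also have "(j * v ^ i) * v * p = j * v ^ Suc i * p" by (simp add: algebra_simps)
  finally show ?case by simp
qed

definition w where "w = v ^ k"

lemma v_cop: "coprime v p"
proof -
  have "\<not> p dvd v" using v by (auto dest: dvd_imp_le)
  then show ?thesis using prime prime_imp_coprime_nat coprime_commute by blast
qed

definition g0 where "g0 = \<psi> 1 div p"

lemma psi1: "\<psi> 1 = 1 + g0 * p" "g0 < p"
proof -
  have one: "1 < n" using n2 by simp
  have "\<psi> 1 mod p = 1" using psi_modp[OF one] p3 by simp
  then show "\<psi> 1 = 1 + g0 * p" unfolding g0_def by (metis mod_div_mult_eq)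
  have "\<psi> 1 < p * p" using pow_range[OF one] n_eq by simp
  then show "g0 < p" unfolding g0_def using p0 by (simp add: div_less_iff_less_mult)
qed

lemma not_dvd_1plus:
  assumes "y mod p = 1"
  shows "coprime y p"
proof -
  have "\<not> p dvd y" using assms p3 by (auto simp: dvd_eq_mod_eq_0)
  then show ?thesis using prime prime_imp_coprime_nat coprime_commute by blast
qed

lemma w1: "[w = 1] (mod p)"
proof (rule ccontr)
  assume nw: "\<not> [w = 1] (mod p)"
  have one: "1 < n" using n2 by simp
  have "coprime w p" unfolding w_def using v_cop by simp
  have "\<not> p dvd w"
  proof
    assume "p dvd w"
    then have "is_unit p" using coprime_common_divisor[OF \<open>coprime w p\<close> _ dvd_refl] by blast
    then show False using p3 by simp
  qed
  then have w0: "w mod p \<noteq> 0" by (simp add: dvd_eq_mod_eq_0)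
  have w1': "w mod p \<noteq> 1" using nw p3 by (simp add: cong_def)
  define \<delta> where "\<delta> = w mod p - 1"
  have \<delta>: "0 < \<delta>" "\<delta> < p" using w0 w1' p0 unfolding \<delta>_def by (simp_all add: less_imp_diff_less)
  have "\<not> p dvd \<delta>" using \<delta> by (auto dest: dvd_imp_le)
  then have c\<delta>: "coprime \<delta> p" using prime prime_imp_coprime_nat coprime_commute by blast
  obtain j where j: "[\<delta> * j = p - g0 mod p] (mod p)" using cong_solve[OF c\<delta>] by blast
  have key: "[g0 + j * w = j] (mod p)"
  proof -
    have "[j * w = j * (w mod p)] (mod p)" by (simp add: cong_def mod_mult_right_eq)
    moreover have "j * (w mod p) = \<delta> * j + j" unfolding \<delta>_def using w0 by (simp add: algebra_simps)
    ultimately have "[j * w = \<delta> * j + j] (mod p)" by simp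
    moreover have "[\<delta> * j + j = (p - g0 mod p) + j] (mod p)" using j by (rule cong_add) (rule cong_refl)
    ultimately have "[j * w = (p - g0 mod p) + j] (mod p)" by (rule cong_trans)
    then have "[g0 + j * w = g0 + (p - g0 mod p) + j] (mod p)" by (simp add: cong_add_lcancel_nat add.assoc)
    moreover have "[g0 + (p - g0 mod p) = 0] (mod p)"
    proof -
      have m: "g0 mod p < p" using mod_less_divisor[OF p0] .
      have e: "p * (g0 div p) + g0 mod p = g0" by (rule mult_div_mod_eq)
      have "g0 + (p - g0 mod p) = p * (g0 div p) + p" using m e by arith
      then show ?thesis by (simp add: cong_0_iff)
    qed
    ultimately show ?thesis by (metis add_0 cong_add cong_refl cong_trans)
  qed
  define a where "a = (1 + j * p) mod n"
  have a: "a < n" unfolding a_def using n0 by simp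
  have "\<psi> a = (\<psi> 1 + j * w * p) mod n" unfolding a_def w_def using shift_pow[OF one, of k j] by simp
  also have "\<dots> = (1 + (g0 + j * w) * p) mod n" using psi1(1) by (simp add: algebra_simps)
  also have "\<dots> = (1 + ((g0 + j * w) * p) mod n) mod n" by (rule mod_add_right_eq[symmetric])
  also have "((g0 + j * w) * p) mod n = p * ((g0 + j * w) mod p)" unfolding n_eq by (simp add: mult.commute mod_mult_mult1)
  also have "(g0 + j * w) mod p = j mod p" using key by (simp add: cong_def)
  also have "p * (j mod p) = (j * p) mod n" unfolding n_eq by (simp add: mult.commute mod_mult_mult1)
  also have "(1 + (j * p) mod n) mod n = a" unfolding a_def by (rule mod_add_right_eq)
  finally have fa: "\<psi> a = a" .
  have "a mod p = (1 + j * p) mod p" unfolding a_def by (rule modn_modp)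
  also have "\<dots> = 1 mod p" by (rule mod_mult_self1)
  also have "\<dots> = 1" using p3 by simp
  finally have "a mod p = 1" .
  then have "coprime a p" by (rule not_dvd_1plus)
  then have all: "\<forall>x<n. \<psi> x = x" using fixgen[OF a _ fa] by blast
  have z: "0 < n" using n0 .
  have "\<psi> ((0 + 1 * p) mod n) = (\<psi> 0 + 1 * v ^ k * p) mod n" using shift_pow[OF z, of k 1] .
  then have "p = (w * p) mod n" using all p_lt_n by (simp add: w_def)
  also have "(w * p) mod n = p * (w mod p)" unfolding n_eq by (simp add: mult.commute mod_mult_mult1)
  finally have "w mod p = 1" using p0 by simp
  then show False using w1' by simp
qed

lemma modpp: "(p * a) mod n = p * (a mod p)"
  unfolding n_eq by (rule mod_mult_mult1)

lemma psi_shift: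
  assumes x: "x < n"
  shows "\<psi> ((x + j * p) mod n) = (\<psi> x + j * p) mod n"
proof -
  have "\<psi> ((x + j * p) mod n) = (\<psi> x + j * w * p) mod n" using shift_pow[OF x, of k j] by (simp add: w_def)
  also have "\<dots> = (\<psi> x + (j * w * p) mod n) mod n" by (rule mod_add_right_eq[symmetric])
  also have "j * w * p = p * (j * w)" by simp
  also have "(p * (j * w)) mod n = p * ((j * w) mod p)" by (rule modpp)
  also have "(j * w) mod p = j mod p"
  proof -
    have "[j * w = j * 1] (mod p)" using w1 by (rule cong_scalar_left)
    then show ?thesis by (simp add: cong_def)
  qed
  also have "p * (j mod p) = (p * j) mod n" by (rule modpp[symmetric])
  also have "p * j = j * p" by simp
  also have "(\<psi> x + (j * p) mod n) mod n = (\<psi> x + j * p) mod n" by (rule mod_add_right_eq)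
  finally show ?thesis .
qed

lemma g0_pos: "0 < g0"
proof (rule ccontr)
  assume "\<not> 0 < g0"
  then have g00: "g0 = 0" by simp
  have "\<psi> 1 = 1 + g0 * p" by (rule psi1(1))
  then have psi11: "\<psi> 1 = 1" unfolding g00 by simp
  have one: "1 < n" using n2 by simp
  have all: "\<forall>x<n. \<psi> x = x" by (rule fixgen[OF one _ psi11]) simp
  then have "M dvd k" using pow_id_dvd by blast
  then have Mk: "M \<le> k" using k_pos by (simp add: dvd_imp_le)
  have "\<forall>a<n. Addx n \<phi> a"
  proof (intro allI impI)
    fix x assume x: "x < n"
    have P1: "1 \<le> P x" "P x < M" using P_props(2,3)[OF x] ni by auto
    have "[P x = 1] (mod k)" using Pk[OF x] .
    then have "P x mod k = 1 mod k" by (simp add: cong_def)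
    then have "k dvd P x - 1" using mod_eq_dvd_iff_nat[OF P1(1)] by simp
    moreover have "P x - 1 < k" using P1 Mk by simp
    ultimately have "P x - 1 = 0"
    proof -
      assume dv: "k dvd P x - 1" and lt: "P x - 1 < k"
      show "P x - 1 = 0"
      proof (rule ccontr)
        assume "P x - 1 \<noteq> 0"
        then have "k \<le> P x - 1" using dv by (simp add: dvd_imp_le)
        then show False using lt by simp
      qed
    qed
    then have "P x = 1" using P1 by simp
    then have "Vx n \<phi> x 1" using P_props(1)[OF x] by simp
    then show "Addx n \<phi> x" by (simp add: Vx_def Addx_def)
  qed
  then show False using nonadd by blast
qed

lemma psi_pow1: "(\<psi> ^^ i) 1 = (1 + i * g0 * p) mod n"
proof (induction i)
  case 0 then show ?case using n2 p3 by simp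
next
  case (Suc i)
  have one: "1 < n" using n2 by simp
  have "(\<psi> ^^ Suc i) 1 = \<psi> ((1 + (i * g0) * p) mod n)" using Suc by (simp add: mult.assoc)
  also have "\<dots> = (\<psi> 1 + (i * g0) * p) mod n" by (rule psi_shift[OF one])
  also have "\<psi> 1 + (i * g0) * p = 1 + Suc i * g0 * p" using psi1(1) by (simp add: algebra_simps)
  finally show ?case .
qed

lemma psi_pow_p:
  assumes x: "x < n"
  shows "(\<psi> ^^ p) x = x"
proof -
  have le: "x \<le> \<psi> x + n" using x by simp
  have "(\<psi> x + n) mod p = \<psi> x mod p" unfolding n_eq by (rule mod_mult_self2)
  also have "\<dots> = x mod p" by (rule psi_modp[OF x])
  finally have "p dvd \<psi> x + n - x" using mod_eq_dvd_iff_nat[OF le] by simp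
  then obtain c where c: "\<psi> x + n - x = p * c" by blast
  then have xc: "x + c * p = \<psi> x + n" using le by (simp add: algebra_simps)
  have psc: "\<psi> x = (x + c * p) mod n" unfolding xc using pow_range[OF x] by simp
  have powi: "(\<psi> ^^ i) x = (x + i * c * p) mod n" for i
  proof (induction i)
    case 0 then show ?case using x by simp
  next
    case (Suc i)
    have "(\<psi> ^^ Suc i) x = \<psi> ((x + (i * c) * p) mod n)" using Suc by (simp add: mult.assoc)
    also have "\<dots> = (\<psi> x + (i * c) * p) mod n" by (rule psi_shift[OF x])
    also have "\<dots> = ((x + c * p) mod n + (i * c) * p) mod n" using psc by simp
    also have "\<dots> = (x + c * p + (i * c) * p) mod n" by (rule mod_add_left_eq)
    also have "x + c * p + (i * c) * p = x + Suc i * c * p" by (simp add: algebra_simps)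
    finally show ?case .
  qed
  have "(\<psi> ^^ p) x = (x + p * c * p) mod n" by (rule powi)
  also have "x + p * c * p = x + c * n" using n_eq by (simp add: algebra_simps)
  also have "(x + c * n) mod n = x" using x by simp
  finally show ?thesis .
qed

lemma M_eq: "M = k * p"
proof (rule dvd_antisym)
  have "\<forall>x<n. (\<phi> ^^ (k * p)) x = x"
  proof (intro allI impI)
    fix x assume x: "x < n"
    have "(\<phi> ^^ (k * p)) x = (\<psi> ^^ p) x" by (simp add: funpow_mult)
    then show "(\<phi> ^^ (k * p)) x = x" using psi_pow_p[OF x] by simp
  qed
  then show "M dvd k * p" by (rule pow_id_dvd)
next
  obtain q where q: "M = k * q" using kM by blast
  have one: "1 < n" using n2 by simp
  have "(\<phi> ^^ (k * q)) 1 = 1" using M_props(2)[OF one] q by simp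
  then have h: "(\<psi> ^^ q) 1 = 1" by (simp add: funpow_mult)
  have e: "(\<psi> ^^ q) 1 = (1 + q * g0 * p) mod n" by (rule psi_pow1)
  have "(1 + q * g0 * p) mod n = 1" using e h by simp
  then have "[1 + q * g0 * p = 1 + 0] (mod n)" using one p3 by (simp add: cong_def)
  then have "[q * g0 * p = 0] (mod n)" by (rule cong_add_lcancel_nat[THEN iffD1])
  then have "p * p dvd p * (q * g0)" using n_eq by (simp add: cong_0_iff mult.commute mult.left_commute)
  then have "p dvd q * g0" using p0 by simp
  moreover have "\<not> p dvd g0" using g0_pos psi1(2) by (auto dest: dvd_imp_le)
  ultimately have "p dvd q" using prime prime_dvd_mult_nat by blast
  then show "k * p dvd M" using q by simp
qed

lemma M2: "M \<ge> 2"
proof -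
  have "M \<noteq> 1" using ni ident_iff by simp
  then show ?thesis using M_props(1) by simp
qed

definition t where "t x = (P x - 1) div k"

lemma P_t:
  assumes x: "x < n"
  shows "P x = 1 + k * t x" "t x < p"
proof -
  have P1: "1 \<le> P x" "P x < M" using P_props(2,3)[OF x] ni by auto
  have "P x mod k = 1 mod k" using Pk[OF x] by (simp add: cong_def)
  then have "k dvd P x - 1" using mod_eq_dvd_iff_nat[OF P1(1)] by simp
  then have e: "P x - 1 = k * t x" unfolding t_def by simp
  then show "P x = 1 + k * t x" using P1 by simp
  have "k * t x < k * p" using e P1 M_eq by linarith
  then show "t x < p" using k_pos by simp
qed

lemma t_res:
  assumes x: "x < n"
  shows "t x = t (x mod p)"
proof -
  define a where "a = x div p * p"
  have ax: "a \<le> x" unfolding a_def by simp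
  have an: "a < n" using ax x by simp
  have Aa: "Addx n \<phi> a" using conjunct1[OF Addjp[of "x div p"]] an unfolding a_def by simp
  have xm: "x mod p < n" using p_lt_n p0 by (meson mod_less_divisor less_trans)
  have "(a + x mod p) mod n = x" unfolding a_def using x by simp
  then have "P x = P (x mod p)" using P_kernel[OF Aa an xm ni] by simp
  then show ?thesis by (simp add: t_def)
qed

lemma P0: "P 0 = 1"
proof -
  have "Vx n \<phi> 0 1" unfolding Vx_def using f_range by simp
  then have "P 0 = 1 mod M" using P_eq n0 ni by blast
  then show ?thesis using M2 by simp
qed

lemma t0: "t 0 = 0" using P0 by (simp add: t_def)

definition C where "C y = (\<Sum>i<k. t ((\<phi> ^^ i) y))"

lemma t_pow_per:
  assumes y: "y < n"
  shows "t ((\<phi> ^^ (i + k)) y) = t ((\<phi> ^^ i) y)"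
proof -
  have "(\<phi> ^^ (i + k)) y mod p = (u ^ (i + k) * y) mod p" by (rule pow_modp[OF y])
  also have "\<dots> = (u ^ i * y) mod p"
  proof -
    have "[u ^ i * u ^ k = u ^ i * 1] (mod p)" using uk by (rule cong_scalar_left)
    then have "[u ^ (i + k) * y = u ^ i * y] (mod p)" by (simp add: power_add cong_scalar_right)
    then show ?thesis by (simp add: cong_def)
  qed
  also have "\<dots> = (\<phi> ^^ i) y mod p" by (rule pow_modp[OF y, symmetric])
  finally have e: "(\<phi> ^^ (i + k)) y mod p = (\<phi> ^^ i) y mod p" .
  have "t ((\<phi> ^^ (i + k)) y) = t ((\<phi> ^^ (i + k)) y mod p)" using t_res pow_range y by blast
  also have "\<dots> = t ((\<phi> ^^ i) y mod p)" using e by simp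
  also have "\<dots> = t ((\<phi> ^^ i) y)" using t_res pow_range y by metis
  finally show ?thesis .
qed

lemma t_pow_kT:
  assumes y: "y < n"
  shows "t ((\<phi> ^^ (k * T)) y) = t y"
proof (induction T)
  case 0 then show ?case by simp
next
  case (Suc T)
  have "t ((\<phi> ^^ (k * Suc T)) y) = t ((\<phi> ^^ (k * T + k)) y)" by (simp add: add.commute)
  also have "\<dots> = t ((\<phi> ^^ (k * T)) y)" by (rule t_pow_per[OF y])
  finally show ?case using Suc by simp
qed

lemma sumP:
  assumes x: "x < n" and y: "y < n"
  shows "(\<Sum>i<P x. P ((\<phi> ^^ i) y)) = P x + k * (t y + t x * C y)"
proof -
  define T where "T = t x"
  have PT: "P x = Suc (k * T)" using P_t(1)[OF x] T_def by simp
  have "(\<Sum>i<P x. P ((\<phi> ^^ i) y)) = (\<Sum>i<P x. 1 + k * t ((\<phi> ^^ i) y))"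
    using P_t(1) pow_range y by (intro sum.cong) auto
  also have "\<dots> = (\<Sum>i<P x. 1) + (\<Sum>i<P x. k * t ((\<phi> ^^ i) y))"
    by (rule sum.distrib)
  also have "\<dots> = P x + k * (\<Sum>i<P x. t ((\<phi> ^^ i) y))"
    by (simp add: sum_distrib_left)
  also have "(\<Sum>i<P x. t ((\<phi> ^^ i) y)) = (\<Sum>i<k * T. t ((\<phi> ^^ i) y)) + t ((\<phi> ^^ (k * T)) y)"
    unfolding PT by simp
  also have "(\<Sum>i<k * T. t ((\<phi> ^^ i) y)) = T * C y"
    using sum_periodic[of "\<lambda>i. t ((\<phi> ^^ i) y)" k T] t_pow_per[OF y] unfolding C_def by simp
  also have "t ((\<phi> ^^ (k * T)) y) = t y" by (rule t_pow_kT[OF y])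
  finally show ?thesis unfolding T_def by (simp add: algebra_simps)
qed

lemma t_rel:
  assumes x: "x < n" and y: "y < n"
  shows "t ((x + y) mod n) mod p = (t x + t y + t x * C y) mod p"
proof -
  have xy: "(x + y) mod n < n" using n0 by simp
  define B where "B = t x + t y + t x * C y"
  have "P ((x + y) mod n) = (\<Sum>i<P x. P ((\<phi> ^^ i) y)) mod M"
    using P_eq[OF xy ni cocycle[OF x y]] .
  also have "\<dots> = (1 + k * B) mod (k * p)"
    unfolding sumP[OF x y] M_eq B_def using P_t(1)[OF x] by (simp add: algebra_simps)
  finally have e: "1 + k * t ((x + y) mod n) = (1 + k * B) mod (k * p)" using P_t(1)[OF xy] by simp
  have "[1 + k * t ((x + y) mod n) = 1 + k * B] (mod k * p)"
    unfolding cong_def using e by simp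
  then have "[k * t ((x + y) mod n) = k * B] (mod k * p)" by (rule cong_add_lcancel_nat[THEN iffD1])
  then have "k * (t ((x + y) mod n) mod p) = k * (B mod p)" by (simp add: cong_def mod_mult_mult1)
  then show ?thesis using k_pos unfolding B_def by simp
qed

lemma all_add_of_t0:
  assumes "\<forall>x<n. t x = 0"
  shows False
proof -
  have "\<forall>a<n. Addx n \<phi> a"
  proof (intro allI impI)
    fix x assume x: "x < n"
    have "P x = 1" using P_t(1)[OF x] assms x by simp
    then have "Vx n \<phi> x 1" using P_props(1)[OF x] by simp
    then show "Addx n \<phi> x" by (simp add: Vx_def Addx_def)
  qed
  then show False using nonadd by blast
qed

lemma geomG: "(\<Sum>i<Suc j. (a::nat) ^ i) = 1 + a * (\<Sum>i<j. a ^ i)"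
proof (induction j)
  case 0 then show ?case by simp
next
  case (Suc j)
  have "(\<Sum>i<Suc (Suc j). a ^ i) = (\<Sum>i<Suc j. a ^ i) + a ^ Suc j" by simp
  also have "\<dots> = 1 + a * (\<Sum>i<j. a ^ i) + a * a ^ j" using Suc by simp
  also have "\<dots> = 1 + a * ((\<Sum>i<j. a ^ i) + a ^ j)" by (simp add: algebra_simps)
  also have "\<dots> = 1 + a * (\<Sum>i<Suc j. a ^ i)" by simp
  finally show ?case .
qed

lemma tz:
  assumes x: "x < n" and Cx: "C x mod p \<noteq> 0"
  shows "t x = 0"
proof -
  define G where "G j = (\<Sum>i<j. (1 + C x) ^ i)" for j
  have tau: "[t ((j * x) mod n) = t x * G j] (mod p)" for j
  proof (induction j)
    case 0 then show ?case by (simp add: G_def t0)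
  next
    case (Suc j)
    have jx: "(j * x) mod n < n" using n0 by simp
    have "(Suc j * x) mod n = (j * x + x) mod n" by (simp add: add.commute)
    also have "\<dots> = ((j * x) mod n + x) mod n" by (rule mod_add_left_eq[symmetric])
    finally have e: "(Suc j * x) mod n = ((j * x) mod n + x) mod n" .
    have "[t ((Suc j * x) mod n) = t ((j * x) mod n) + t x + t ((j * x) mod n) * C x] (mod p)"
      unfolding e cong_def using t_rel[OF jx x] by simp
    moreover have "[t ((j * x) mod n) + t x + t ((j * x) mod n) * C x = t x * G j + t x + t x * G j * C x] (mod p)"
      by (intro cong_add cong_mult cong_refl Suc)
    moreover have "t x * G j + t x + t x * G j * C x = t x * G (Suc j)"
      unfolding G_def geomG by (simp add: algebra_simps)
    ultimately show ?case by (metis cong_trans)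
  qed
  have "(p * x) mod n mod p = 0" by (simp add: modn_modp)
  then have "t ((p * x) mod n) = 0" using t_res[of "(p * x) mod n"] n0 t0 by simp
  then have "[t x * G p = 0] (mod p)" using tau[of p] by (simp add: cong_sym)
  moreover have "[G p = 1] (mod p)"
    unfolding G_def by (rule geom_one[OF prime]) (use Cx in \<open>simp add: dvd_eq_mod_eq_0\<close>)
  ultimately have "[t x * 1 = 0] (mod p)" by (metis cong_scalar_left cong_sym cong_trans)
  then have "t x mod p = 0" by (simp add: cong_def)
  then show ?thesis using P_t(2)[OF x] by simp
qed

lemma t_sym:
  assumes x: "x < n" and y: "y < n"
  shows "(t x * C y) mod p = (t y * C x) mod p"
proof -
  have "(t x + t y + t x * C y) mod p = (t y + t x + t y * C x) mod p"
    using t_rel[OF x y] t_rel[OF y x] by (simp add: add.commute)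
  then have "[t x + t y + t x * C y = t x + t y + t y * C x] (mod p)" by (simp add: cong_def add.commute)
  then have "[t x * C y = t y * C x] (mod p)" by (simp add: add.assoc cong_add_lcancel_nat)
  then show ?thesis by (simp add: cong_def)
qed

lemma C_zero:
  assumes y: "y < n"
  shows "C y mod p = 0"
proof (rule ccontr)
  assume Cy: "C y mod p \<noteq> 0"
  have ty: "t y = 0" using tz[OF y Cy] .
  have "\<forall>x<n. t x = 0"
  proof (intro allI impI)
    fix x assume x: "x < n"
    have "(t x * C y) mod p = 0" using t_sym[OF x y] ty by simp
    then have "p dvd t x * C y" by (simp add: dvd_eq_mod_eq_0)
    moreover have "\<not> p dvd C y" using Cy by (simp add: dvd_eq_mod_eq_0)
    ultimately have "p dvd t x" using prime prime_dvd_mult_nat by blast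
    then show "t x = 0" using P_t(2)[OF x] by (auto dest: dvd_imp_le)
  qed
  then show False by (rule all_add_of_t0)
qed

lemma t_add:
  assumes x: "x < n" and y: "y < n"
  shows "t ((x + y) mod n) mod p = (t x + t y) mod p"
proof -
  have "(t x * C y) mod p = (t x * (C y mod p)) mod p" by (rule mod_mult_right_eq[symmetric])
  then have "(t x * C y) mod p = 0" using C_zero[OF y] by simp
  then show ?thesis using t_rel[OF x y] by (metis mod_add_right_eq add_0_right)
qed

definition s where "s = t 1"

lemma t_lin: "x < n \<Longrightarrow> t x = (x * s) mod p"
proof (induction x)
  case 0 then show ?case by (simp add: t0)
next
  case (Suc x)
  have x: "x < n" using Suc by simp
  have one: "1 < n" using n2 by simp
  have "t (Suc x) = t ((x + 1) mod n)" using Suc by simp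
  then have "t (Suc x) mod p = (t x + t 1) mod p" using t_add[OF x one] by simp
  also have "\<dots> = ((x * s) mod p + s) mod p" using Suc x by (simp add: s_def)
  also have "\<dots> = (x * s + s) mod p" by (rule mod_add_left_eq)
  also have "x * s + s = Suc x * s" by simp
  finally show ?case using P_t(2)[OF Suc.prems] by simp
qed

lemma s_range: "0 < s" "s < p"
proof -
  have one: "1 < n" using n2 by simp
  show "s < p" using P_t(2)[OF one] by (simp add: s_def)
  show "0 < s"
  proof (rule ccontr)
    assume "\<not> 0 < s"
    then have "\<forall>x<n. t x = 0" using t_lin by simp
    then show False by (rule all_add_of_t0)
  qed
qed

lemma k2: "k \<ge> 2"
proof (rule ccontr)
  assume "\<not> k \<ge> 2"
  then have k1: "k = 1" using k_pos by simp
  have "\<forall>x<n. t x = 0"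
  proof (intro allI impI)
    fix x assume x: "x < n"
    have "C x = t x" unfolding C_def k1 by simp
    then have "t x mod p = 0" using C_zero[OF x] by simp
    then show "t x = 0" using P_t(2)[OF x] by simp
  qed
  then show False by (rule all_add_of_t0)
qed

lemma derived_eq: "Defs.derived n \<phi> = gmap p k u s"
proof
  fix a
  have one: "1 < n" using n2 by simp
  have "Defs.derived n \<phi> a = (\<Sum>i<a. P ((\<phi> ^^ i) 1)) mod (k * p)"
    using one M_eq p3 by (simp add: Defs.derived_def skew_sigma_def)
  also have "(\<Sum>i<a. P ((\<phi> ^^ i) 1)) = (\<Sum>i<a. 1 + k * ((u ^ i * s) mod p))"
  proof (rule sum.cong)
    fix i
    have r: "(\<phi> ^^ i) 1 < n" using pow_range[OF one] .
    have "((\<phi> ^^ i) 1 * s) mod p = (((\<phi> ^^ i) 1 mod p) * s) mod p" by (simp add: mod_mult_left_eq)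
    also have "\<dots> = (((u ^ i * 1) mod p) * s) mod p" using pow_modp[OF one] by simp
    also have "\<dots> = (u ^ i * s) mod p" by (simp add: mod_mult_left_eq)
    finally have "((\<phi> ^^ i) 1 * s) mod p = (u ^ i * s) mod p" .
    then show "P ((\<phi> ^^ i) 1) = 1 + k * ((u ^ i * s) mod p)"
      using P_t(1)[OF r] t_lin[OF r] by simp
  qed simp
  also have "\<dots> = (\<Sum>i<a. 1) + (\<Sum>i<a. k * ((u ^ i * s) mod p))" by (rule sum.distrib)
  also have "\<dots> = a + k * Dg p u s a" by (simp add: Dg_def sum_distrib_left)
  finally show "Defs.derived n \<phi> a = gmap p k u s a" by (simp add: gmap_def)
qed

lemma chain1: "derive_step (n, \<phi>) = (k * p, gmap p k u s)"
  by (simp add: derive_step_def M_eq derived_eq)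

lemma gl_inst: "gl p k u s"
  by unfold_locales (use prime u_cop k_def k2 s_range in auto)

lemma complexity3: "complexity n \<phi> = 3"
proof (rule complexity_eq)
  interpret G: gl p k u s by (rule gl_inst)
  have c1: "derive_step (n, \<phi>) = (k * p, gmap p k u s)" by (rule chain1)
  have c2: "(derive_step ^^ 2) (n, \<phi>) = (p, hmap p u)"
    using c1 G.chain_g by (simp add: numeral_2_eq_2)
  have c3: "(derive_step ^^ 3) (n, \<phi>) = derive_step (p, hmap p u)"
    using c2 by (simp add: numeral_3_eq_3 numeral_2_eq_2)
  have c4: "(derive_step ^^ (3 + 1)) (n, \<phi>) = derive_step ((derive_step ^^ 3) (n, \<phi>))"
    by (simp only: add.commute[of 3 1] funpow_add comp_apply) simp
  also have "\<dots> = derive_step (derive_step (p, hmap p u))" using c3 by simp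
  finally have c4: "(derive_step ^^ (3 + 1)) (n, \<phi>) = derive_step (derive_step (p, hmap p u))" .
  show "fst ((derive_step ^^ (3 + 1)) (n, \<phi>)) = 1" using c4 G.chain_h(2) by simp
  show "\<forall>i\<le>3. 2 \<le> fst ((derive_step ^^ i) (n, \<phi>))"
  proof (intro allI impI)
    fix i :: nat assume "i \<le> 3"
    then consider "i = 0" | "i = 1" | "i = 2" | "i = 3" by linarith
    then show "2 \<le> fst ((derive_step ^^ i) (n, \<phi>))"
    proof cases
      case 1 then show ?thesis using n2 by simp
    next
      case 2 then show ?thesis using c1 G.kp1 by simp
    next
      case 3 then show ?thesis using c2 G.p2 by simp
    next
      case 4 then show ?thesis using c3 G.chain_h(1) by simp
    qed
  qed
qed

end

definition Gz :: "int \<Rightarrow> int \<Rightarrow> int" where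
  "Gz P x = x * (P * x + P - 1)"

definition phi0 :: "nat \<Rightarrow> nat \<Rightarrow> nat" where
  "phi0 p x = nat (Gz (int p) (int x) mod (int p)^2)"

lemma Gz_cong: "[x = y] (mod m) \<Longrightarrow> [Gz P x = Gz P y] (mod m)"
  unfolding Gz_def by (intro cong_mult cong_diff cong_add cong_refl cong_scalar_left) auto

lemma Gz_sq: "Gz P (Gz P x) = (1 - 2 * P) * x + P^2 * (x * (x + 1) * (1 - 2 * x) + P * (x * (x + 1))^2)"
  unfolding Gz_def by (simp add: algebra_simps power2_eq_square)

lemma Gz_add: "Gz P (a + b) = Gz P a + (1 - 2 * a * P) * Gz P b + P^2 * (2 * a * (b^2 + b))"
  unfolding Gz_def by (simp add: algebra_simps power2_eq_square)

locale ex0 =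
  fixes p :: nat
  assumes p3: "p \<ge> 3"
begin

abbreviation "N \<equiv> (int p)^2"
abbreviation "f \<equiv> phi0 p"

lemma N0: "N > 0" using p3 by simp

lemma int_f: "int (f x) = Gz (int p) (int x) mod N"
  unfolding phi0_def using N0 by simp

lemma f_lt: "f x < p^2"
proof -
  have "int (f x) < N" unfolding int_f using N0 by simp
  then show ?thesis by (metis of_nat_less_iff of_nat_power)
qed

lemma f_cong: "[int (f x) = Gz (int p) (int x)] (mod N)"
  unfolding int_f by (simp add: cong_def)

lemma ff_cong: "[int (f (f x)) = (1 - 2 * int p) * int x] (mod N)"
proof -
  have "[int (f (f x)) = Gz (int p) (int (f x))] (mod N)" by (rule f_cong)
  moreover have "[Gz (int p) (int (f x)) = Gz (int p) (Gz (int p) (int x))] (mod N)"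
    by (rule Gz_cong[OF f_cong])
  moreover have "[Gz (int p) (Gz (int p) (int x)) = (1 - 2 * int p) * int x] (mod N)"
    unfolding Gz_sq by (simp add: cong_def)
  ultimately show ?thesis by (metis cong_trans)
qed

lemma f_even: "[int ((f ^^ (2 * j)) x) = (1 - 2 * int j * int p) * int x] (mod N)"
proof (induction j arbitrary: x)
  case 0 then show ?case by simp
next
  case (Suc j)
  let ?c = "1 - 2 * int j * int p"
  have e1: "(f ^^ (2 * Suc j)) x = (f ^^ (2 * j)) (f (f x))"
  proof -
    have a: "(f ^^ (2 * j + 2)) x = (f ^^ (2 * j)) ((f ^^ 2) x)" by (simp only: funpow_add comp_apply)
    have b: "2 * Suc j = 2 * j + 2" by simp
    have c: "(f ^^ 2) x = f (f x)" by (simp add: numeral_2_eq_2)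
    show ?thesis unfolding b using a c by simp
  qed
  have A: "[int ((f ^^ (2 * j)) (f (f x))) = ?c * int (f (f x))] (mod N)" by (rule Suc.IH)
  have B: "[?c * int (f (f x)) = ?c * ((1 - 2 * int p) * int x)] (mod N)"
    by (rule cong_scalar_left[OF ff_cong])
  have C: "?c * ((1 - 2 * int p) * int x) = (1 - 2 * int (Suc j) * int p) * int x + N * (4 * int j * int x)"
    by (simp add: algebra_simps power2_eq_square)
  have D: "[(1 - 2 * int (Suc j) * int p) * int x + N * (4 * int j * int x) = (1 - 2 * int (Suc j) * int p) * int x] (mod N)"
    by (simp add: cong_iff_dvd_diff)
  have "[int ((f ^^ (2 * Suc j)) x) = ?c * ((1 - 2 * int p) * int x)] (mod N)"
    unfolding e1 using cong_trans[OF A B] .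
  then have "[int ((f ^^ (2 * Suc j)) x) = (1 - 2 * int (Suc j) * int p) * int x + N * (4 * int j * int x)] (mod N)"
    unfolding C .
  then show ?case using D by (rule cong_trans)
qed

lemma f_odd: "[int ((f ^^ (1 + 2 * a)) b) = (1 - 2 * int a * int p) * Gz (int p) (int b)] (mod N)"
proof -
  have "1 + 2 * a = 2 * a + 1" by simp
  then have "(f ^^ (1 + 2 * a)) b = (f ^^ (2 * a)) ((f ^^ 1) b)" by (simp only: funpow_add comp_apply)
  then have "(f ^^ (1 + 2 * a)) b = (f ^^ (2 * a)) (f b)" by simp
  then have "[int ((f ^^ (1 + 2 * a)) b) = (1 - 2 * int a * int p) * int (f b)] (mod N)"
    using f_even by simp
  moreover have "[(1 - 2 * int a * int p) * int (f b) = (1 - 2 * int a * int p) * Gz (int p) (int b)] (mod N)"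
    by (rule cong_scalar_left[OF f_cong])
  ultimately show ?thesis by (rule cong_trans)
qed

lemma nat_eq_by_int:
  assumes "x < p^2" "y < p^2" "[int x = int y] (mod N)"
  shows "x = y"
proof -
  have "N = int (p^2)" by simp
  then have "[int x = int y] (mod int (p^2))" using assms(3) by simp
  then have "[x = y] (mod p^2)" by (rule cong_int_iff[THEN iffD1])
  then show ?thesis using assms(1,2) by (simp add: cong_def)
qed

lemma f0: "f 0 = 0" by (simp add: phi0_def Gz_def)

lemma f_inj: "x < p^2 \<Longrightarrow> y < p^2 \<Longrightarrow> f x = f y \<Longrightarrow> x = y"
proof -
  assume x: "x < p^2" and y: "y < p^2" and e: "f x = f y"
  have "[(1 + 2 * int p) * ((1 - 2 * int p) * int x) = (1 + 2 * int p) * ((1 - 2 * int p) * int y)] (mod N)"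
  proof (rule cong_scalar_left)
    have "[(1 - 2 * int p) * int x = int (f (f x))] (mod N)" by (rule cong_sym[OF ff_cong])
    also have "int (f (f x)) = int (f (f y))" using e by simp
    also have "[int (f (f y)) = (1 - 2 * int p) * int y] (mod N)" by (rule ff_cong)
    finally show "[(1 - 2 * int p) * int x = (1 - 2 * int p) * int y] (mod N)" .
  qed
  moreover have id: "(1 + 2 * int p) * ((1 - 2 * int p) * z) = z + N * (- 4 * z)" for z
    by (simp add: algebra_simps power2_eq_square)
  ultimately have A: "[int x + N * (- 4 * int x) = int y + N * (- 4 * int y)] (mod N)" by simp
  have cN: "[z + N * w = z] (mod N)" for z w :: int by (simp add: cong_iff_dvd_diff)
  have "[int x = int y] (mod N)"
    using cong_trans[OF cong_trans[OF cong_sym[OF cN] A] cN] .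
  then show "x = y" using nat_eq_by_int x y by blast
qed

lemma f_skew: "skew_morphism (p^2) f"
  unfolding skew_morphism_def
proof (intro conjI)
  show "1 \<le> p^2" using p3 by simp
  show "f 0 = 0" by (rule f0)
  have inj: "inj_on f {0..<p^2}" using f_inj by (auto intro: inj_onI)
  have sub: "f ` {0..<p^2} \<subseteq> {0..<p^2}" using f_lt by auto
  have "f ` {0..<p^2} = {0..<p^2}"
    by (rule card_subset_eq) (use sub card_image[OF inj] in auto)
  then show "bij_betw f {0..<p^2} {0..<p^2}" using inj by (simp add: bij_betw_def)
  show "\<forall>a<p^2. \<exists>i. \<forall>b<p^2. f ((a + b) mod p^2) = (f a + (f ^^ i) b) mod p^2"
  proof (intro allI impI exI)
    fix a b assume a: "a < p^2" and b: "b < p^2"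
    let ?P = "int p"
    have l1: "[int (f ((a + b) mod p^2)) = Gz ?P (int ((a + b) mod p^2))] (mod N)" by (rule f_cong)
    have l2: "[Gz ?P (int ((a + b) mod p^2)) = Gz ?P (int a + int b)] (mod N)"
      by (rule Gz_cong) (simp add: cong_def zmod_int)
    have l3: "Gz ?P (int a + int b) = Gz ?P (int a) + (1 - 2 * int a * ?P) * Gz ?P (int b) + N * (2 * int a * ((int b)^2 + int b))"
      by (rule Gz_add)
    have l4: "[Gz ?P (int a) + (1 - 2 * int a * ?P) * Gz ?P (int b) + N * (2 * int a * ((int b)^2 + int b)) = Gz ?P (int a) + (1 - 2 * int a * ?P) * Gz ?P (int b)] (mod N)"
      by (simp add: cong_def)
    have r1: "[int ((f a + (f ^^ (1 + 2 * a)) b) mod p^2) = int (f a) + int ((f ^^ (1 + 2 * a)) b)] (mod N)"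
      by (simp add: cong_def zmod_int)
    have r2: "[int (f a) + int ((f ^^ (1 + 2 * a)) b) = Gz ?P (int a) + (1 - 2 * int a * ?P) * Gz ?P (int b)] (mod N)"
      by (rule cong_add[OF f_cong f_odd])
    have "[int (f ((a + b) mod p^2)) = int ((f a + (f ^^ (1 + 2 * a)) b) mod p^2)] (mod N)"
    proof -
      have "[int (f ((a + b) mod p^2)) = Gz ?P (int a) + (1 - 2 * int a * ?P) * Gz ?P (int b)] (mod N)"
        using cong_trans[OF cong_trans[OF l1 l2] l4[folded l3]] .
      then show ?thesis using cong_trans[OF r1 r2] cong_sym cong_trans by blast
    qed
    moreover have "f ((a + b) mod p^2) < p^2" by (rule f_lt)
    moreover have "(f a + (f ^^ (1 + 2 * a)) b) mod p^2 < p^2" using p3 by simp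
    ultimately show "f ((a + b) mod p^2) = (f a + (f ^^ (1 + 2 * a)) b) mod p^2"
      using nat_eq_by_int by blast
  qed
qed

lemma f_nonadd: "\<not> (\<forall>a<p^2. Addx (p^2) f a)"
proof
  assume A: "\<forall>a<p^2. Addx (p^2) f a"
  have one: "1 < p^2"
  proof -
    have "3 * 3 \<le> p * p" by (rule mult_le_mono[OF p3 p3])
    then show ?thesis by (simp add: power2_eq_square)
  qed
  have e: "f ((1 + 1) mod p^2) = (f 1 + f 1) mod p^2" using A one unfolding Addx_def by blast
  have "[int (f ((1 + 1) mod p^2)) = int ((f 1 + f 1) mod p^2)] (mod N)" using e by simp
  moreover have "[int (f ((1 + 1) mod p^2)) = Gz (int p) 2] (mod N)"
  proof -
    have "[int (f ((1 + 1) mod p^2)) = Gz (int p) (int ((1 + 1) mod p^2))] (mod N)" by (rule f_cong)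
    moreover have "[Gz (int p) (int ((1 + 1) mod p^2)) = Gz (int p) 2] (mod N)"
      by (rule Gz_cong) (simp add: cong_def zmod_int)
    ultimately show ?thesis by (rule cong_trans)
  qed
  moreover have "[int ((f 1 + f 1) mod p^2) = Gz (int p) 1 + Gz (int p) 1] (mod N)"
  proof -
    have "[int ((f 1 + f 1) mod p^2) = int (f 1) + int (f 1)] (mod N)" by (simp add: cong_def zmod_int)
    moreover have "[int (f 1) + int (f 1) = Gz (int p) (int 1) + Gz (int p) (int 1)] (mod N)"
      by (rule cong_add[OF f_cong f_cong])
    ultimately have "[int ((f 1 + f 1) mod p^2) = Gz (int p) (int 1) + Gz (int p) (int 1)] (mod N)"
      by (rule cong_trans)
    then show ?thesis by simp
  qed
  ultimately have "[Gz (int p) 2 = Gz (int p) 1 + Gz (int p) 1] (mod N)" by (metis cong_sym cong_trans)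
  moreover have "Gz (int p) 2 = Gz (int p) 1 + Gz (int p) 1 + 2 * int p" by (simp add: Gz_def algebra_simps)
  ultimately have "[Gz (int p) 1 + Gz (int p) 1 + 2 * int p = Gz (int p) 1 + Gz (int p) 1 + 0] (mod N)" by simp
  then have "[2 * int p = 0] (mod N)" using cong_add_lcancel by blast
  then have "int p * int p dvd int p * 2" by (simp add: cong_0_iff power2_eq_square mult.commute)
  then have "int p dvd 2" using p3 by simp
  then have "int p \<le> 2" by (rule zdvd_imp_le) simp
  then show False using p3 by simp
qed

end

definition mulmap :: "nat \<Rightarrow> nat \<Rightarrow> nat \<Rightarrow> nat" where
  "mulmap n c x = (c * x) mod n"

lemma mulmap_skew:
  assumes n: "n \<ge> 2" and c: "coprime c n"
  shows "skew_morphism n (mulmap n c)" "\<forall>a<n. Addx n (mulmap n c) a"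
proof -
  have add: "mulmap n c ((a + b) mod n) = (mulmap n c a + mulmap n c b) mod n" for a b
    unfolding mulmap_def by (simp add: mod_mult_right_eq mod_add_eq distrib_left)
  then show "\<forall>a<n. Addx n (mulmap n c) a" unfolding Addx_def by simp
  show "skew_morphism n (mulmap n c)"
    unfolding skew_morphism_def
  proof (intro conjI)
    show "1 \<le> n" using n by simp
    show "mulmap n c 0 = 0" by (simp add: mulmap_def)
    have inj: "inj_on (mulmap n c) {0..<n}"
    proof (rule inj_onI)
      fix x y assume x: "x \<in> {0..<n}" and y: "y \<in> {0..<n}" and e: "mulmap n c x = mulmap n c y"
      then have "[c * x = c * y] (mod n)" by (simp add: mulmap_def cong_def)
      then have "[x = y] (mod n)" using cong_mult_lcancel_nat c by blast
      then show "x = y" using x y by (simp add: cong_def)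
    qed
    have sub: "mulmap n c ` {0..<n} \<subseteq> {0..<n}" using n by (auto simp: mulmap_def)
    have "mulmap n c ` {0..<n} = {0..<n}"
      by (rule card_subset_eq) (use sub card_image[OF inj] in auto)
    then show "bij_betw (mulmap n c) {0..<n} {0..<n}" using inj by (simp add: bij_betw_def)
    show "\<forall>a<n. \<exists>i. \<forall>b<n. mulmap n c ((a + b) mod n) = (mulmap n c a + (mulmap n c ^^ i) b) mod n"
      using add by (intro allI impI exI[of _ 1]) simp
  qed
qed

theorem proposition6p1:
  fixes p :: nat
  assumes "prime p" and "odd p"
  shows "Comp (p ^ 2) = {0, 1, 3}"
proof -
  have p3: "p \<ge> 3"
  proof -
    have "p \<ge> 2" using assms(1) prime_ge_2_nat by blast
    moreover have "p \<noteq> 2" using assms(2) by auto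
    ultimately show ?thesis by presburger
  qed
  have n2: "p ^ 2 \<ge> 2"
  proof -
    have "3 * 3 \<le> p * p" by (rule mult_le_mono[OF p3 p3])
    then show ?thesis by (simp add: power2_eq_square)
  qed
  show ?thesis
  proof
    show "Comp (p ^ 2) \<subseteq> {0, 1, 3}"
    proof
      fix c assume "c \<in> Comp (p ^ 2)"
      then obtain \<phi> where sk: "skew_morphism (p ^ 2) \<phi>" and c: "complexity (p ^ 2) \<phi> = c"
        unfolding Comp_def by blast
      interpret S: skew "p ^ 2" \<phi> by unfold_locales (rule sk)
      show "c \<in> {0, 1, 3}"
      proof (cases "\<forall>a<p ^ 2. Addx (p ^ 2) \<phi> a")
        case True
        then show ?thesis using S.complexity_auto[OF n2 True] c by (auto split: if_splits)
      next
        case False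
        interpret Q: psq p \<phi> by unfold_locales (use assms False in auto)
        show ?thesis using Q.complexity3 c by simp
      qed
    qed
  next
    show "{0, 1, 3} \<subseteq> Comp (p ^ 2)"
    proof -
      have c2: "coprime 2 (p ^ 2)" using assms(2) by (simp add: coprime_left_2_iff_odd)
      have c1: "coprime 1 (p ^ 2)" by simp
      have z: "0 \<in> Comp (p ^ 2)"
      proof -
        note M = mulmap_skew[OF n2 c1]
        interpret S: skew "p ^ 2" "mulmap (p ^ 2) 1" by unfold_locales (rule M(1))
        have "is_identity_on (p ^ 2) (mulmap (p ^ 2) 1)" by (simp add: is_identity_on_def mulmap_def)
        then have "complexity (p ^ 2) (mulmap (p ^ 2) 1) = 0" using S.complexity_auto[OF n2 M(2)] by simp
        then show ?thesis unfolding Comp_def using M(1) by blast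
      qed
      have o: "1 \<in> Comp (p ^ 2)"
      proof -
        note M = mulmap_skew[OF n2 c2]
        interpret S: skew "p ^ 2" "mulmap (p ^ 2) 2" by unfold_locales (rule M(1))
        have "\<not> is_identity_on (p ^ 2) (mulmap (p ^ 2) 2)"
        proof
          assume "is_identity_on (p ^ 2) (mulmap (p ^ 2) 2)"
          then have "mulmap (p ^ 2) 2 1 = 1" using n2 by (simp add: is_identity_on_def)
          moreover have "2 < p ^ 2"
          proof -
            have "3 * 3 \<le> p * p" by (rule mult_le_mono[OF p3 p3])
            then show ?thesis by (simp add: power2_eq_square)
          qed
          ultimately show False by (simp add: mulmap_def)
        qed
        then have "complexity (p ^ 2) (mulmap (p ^ 2) 2) = 1" using S.complexity_auto[OF n2 M(2)] by simp
        then show ?thesis unfolding Comp_def using M(1) by blast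
      qed
      have th: "3 \<in> Comp (p ^ 2)"
      proof -
        interpret E: ex0 p by unfold_locales (rule p3)
        interpret Q: psq p "phi0 p"
          by unfold_locales (use assms E.f_skew E.f_nonadd in auto)
        show ?thesis unfolding Comp_def using E.f_skew Q.complexity3 by blast
      qed
      show ?thesis using z o th by auto
    qed
  qed
qed

end
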